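(* Let $p_0$ be an absolutely continuous density on $\mathbb{R}$ with $i(p_0)<\infty$, and define $p_t(\cdot) := p_0(\cdot+t)$ for $t\in\mathbb{R}$. Suppose that $\psi\colon\mathbb{R}\to\mathbb{R}$ is decreasing and right-continuous, and that there exists $t_0>0$ such that $\int_\mathbb{R}\psi(z-t)^2p_0(z)\,dz<\infty$ for $t\in\{-t_0,t_0\}$. Then $\int_\mathbb{R}\psi(z)^2\bigl(\sqrt{p_t(z)} - \sqrt{p_0(z)}\bigr)^2\,dz\to0$ and $\int_\mathbb{R}(\psi(z-t) - \psi(z))^2p_0(z)\,dz\to0$ as $t\to0$. Moreover, $\varPsi(t) := \int_\mathbb{R}\psi(z-t)p_0(z)\,dz$ and $\int_\mathbb{R}p_0(z-t)\,d\psi(z)$ are finite for all $t\in[-t_0,t_0]$, and $\lim_{v\to0}\sup_{s,t\in[-v,v],\,s\ne t}\Bigl|\frac{\varPsi(t) - \varPsi(s)}{t - s} + \int_\mathbb{R}p_0\,d\psi\Bigr| = 0$, where $-\int_\mathbb{R}p_0\,d\psi = -\lim_{t\to0}\int_\mathbb{R}p_0(z-t)\,d\psi(z) = \varPsi'(0)\in[0,\infty)$.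
   Context: $i(p_0) := \int_{\{p_0>0\}}(p_0')^2/p_0$. Integrals with respect to $d\psi$ are Lebesgue–Stieltjes integrals. *)

theory Defs
  imports "HOL-Analysis.Analysis"
begin

text \<open>Absolute continuity of a real function on a set (epsilon-delta definition
  with finitely many disjoint subintervals).\<close>
definition abs_cont_on :: "real set \<Rightarrow> (real \<Rightarrow> real) \<Rightarrow> bool" where
  "abs_cont_on S f \<longleftrightarrow>
     (\<forall>e>0. \<exists>d>0. \<forall>n::nat. \<forall>a b :: nat \<Rightarrow> real.
        (\<forall>i<n. a i \<le> b i \<and> {a i..b i} \<subseteq> S) \<and>
        (\<forall>i<n. \<forall>j<n. i \<noteq> j \<longrightarrow> b i \<le> a j \<or> b j \<le> a i) \<and>
        (\<Sum>i<n. b i - a i) < d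
        \<longrightarrow> (\<Sum>i<n. \<bar>f (b i) - f (a i)\<bar>) < e)"

text \<open>Absolutely continuous on the real line: absolutely continuous on every
  compact interval.\<close>
definition abs_continuous :: "(real \<Rightarrow> real) \<Rightarrow> bool" where
  "abs_continuous f \<longleftrightarrow> (\<forall>a b. abs_cont_on {a..b} f)"

text \<open>Fisher information i(p0) = integral over {p0 > 0} of (p0')^2/p0, where p0' is
  an almost-everywhere derivative of p0.\<close>
definition fisher_info :: "(real \<Rightarrow> real) \<Rightarrow> (real \<Rightarrow> real) \<Rightarrow> ennreal" where
  "fisher_info p0 p0' = (\<integral>\<^sup>+ z. indicator {x. p0 x > 0} z * ennreal ((p0' z)\<^sup>2 / p0 z) \<partial>lborel)"

text \<open>Lebesgue--Stieltjes integral with respect to a decreasing right-continuous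
  function psi: d psi is the negative of the Lebesgue--Stieltjes measure of -psi.\<close>
definition LS_measure_dec :: "(real \<Rightarrow> real) \<Rightarrow> real measure" where
  "LS_measure_dec \<psi> = interval_measure (\<lambda>x. - \<psi> x)"

definition LS_integrable_dec :: "(real \<Rightarrow> real) \<Rightarrow> (real \<Rightarrow> real) \<Rightarrow> bool" where
  "LS_integrable_dec \<psi> f \<longleftrightarrow> integrable (LS_measure_dec \<psi>) f"

definition LS_integral_dec :: "(real \<Rightarrow> real) \<Rightarrow> (real \<Rightarrow> real) \<Rightarrow> real" where
  "LS_integral_dec \<psi> f = - (\<integral>z. f z \<partial>LS_measure_dec \<psi>)"

end

theory Submission
  imports Defs
begin

lemma abs_cont_on_dist:
  assumes "abs_cont_on S f" "e > 0"
  obtains d where "d > 0" "\<And>x y. x \<in> S \<Longrightarrow> y \<in> S \<Longrightarrow> {min x y..max x y} \<subseteq> S \<Longrightarrow> \<bar>x - y\<bar> < d \<Longrightarrow> \<bar>f x - f y\<bar> < e"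
proof -
  note AC = assms(1)[unfolded abs_cont_on_def, rule_format, OF assms(2)]
  obtain d where d: "d > 0" and H: "\<forall>n (a::nat\<Rightarrow>real) b.
        (\<forall>i<n. a i \<le> b i \<and> {a i..b i} \<subseteq> S) \<and>
        (\<forall>i<n. \<forall>j<n. i \<noteq> j \<longrightarrow> b i \<le> a j \<or> b j \<le> a i) \<and>
        (\<Sum>i<n. b i - a i) < d
        \<longrightarrow> (\<Sum>i<n. \<bar>f (b i) - f (a i)\<bar>) < e"
    apply (insert AC) apply (erule exE) apply (erule conjE) apply (rule that) apply assumption apply assumption done
  show ?thesis
  proof (rule that[OF d])
    fix x y assume xy: "x \<in> S" "y \<in> S" "{min x y..max x y} \<subseteq> S" "\<bar>x - y\<bar> < d"
    have "\<bar>f (max x y) - f (min x y)\<bar> < e"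
      using H[rule_format, of "Suc 0" "\<lambda>_. min x y" "\<lambda>_. max x y"] xy by (cases "x \<le> y") (auto simp: min_def max_def)
    then show "\<bar>f x - f y\<bar> < e" by (auto simp: min_def max_def split: if_splits)
  qed
qed

lemma abs_continuous_isCont:
  assumes "abs_continuous f"
  shows "isCont f x"
proof (rule continuous_at_eps_delta[THEN iffD2], intro allI impI)
  fix e :: real assume "e > 0"
  have "abs_cont_on {x-1..x+1} f" using assms unfolding abs_continuous_def by blast
  then obtain d where d: "d > 0" and H: "\<And>u v. u \<in> {x-1..x+1} \<Longrightarrow> v \<in> {x-1..x+1} \<Longrightarrow>
     {min u v..max u v} \<subseteq> {x-1..x+1} \<Longrightarrow> \<bar>u - v\<bar> < d \<Longrightarrow> \<bar>f u - f v\<bar> < e"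
    using abs_cont_on_dist \<open>e > 0\<close> by metis
  show "\<exists>d>0. \<forall>x'. dist x' x < d \<longrightarrow> dist (f x') (f x) < e"
  proof (intro exI[of _ "min d 1"] conjI allI impI)
    fix y assume "dist y x < min d 1"
    then have "y \<in> {x-1..x+1}" "\<bar>y - x\<bar> < d" "{min y x..max y x} \<subseteq> {x-1..x+1}"
      by (auto simp: dist_real_def)
    then show "dist (f y) (f x) < e"
      using H[of y x] by (simp add: dist_real_def)
  qed (use d in auto)
qed

lemma abs_continuous_cont: "abs_continuous f \<Longrightarrow> continuous_on S f"
  by (simp add: abs_continuous_isCont continuous_at_imp_continuous_on)



lemma nonoverlap_real:
  fixes c d c' d' :: real
  assumes "c < d" "c' < d'" "{c<..<d} \<inter> {c'<..<d'} = {}"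
  shows "d \<le> c' \<or> d' \<le> c"
proof (rule ccontr)
  assume "\<not> (d \<le> c' \<or> d' \<le> c)"
  then have "max c c' < min d d'" using assms by auto
  then have "(max c c' + min d d')/2 \<in> {c<..<d} \<inter> {c'<..<d'}" by auto
  then show False using assms by blast
qed

lemma luzin_N:
  fixes f :: "real \<Rightarrow> real"
  assumes ac: "abs_cont_on {a..b} f" and cont: "continuous_on {a..b} f"
    and N: "negligible N" "N \<subseteq> {a..b}"
  shows "negligible (f ` N)"
proof (cases "a < b")
  case False
  have "N \<subseteq> {a}"
  proof
    fix x assume "x \<in> N"
    then have "a \<le> x" "x \<le> b" using N(2) by auto
    then show "x \<in> {a}" using False by simp
  qed
  then have "f ` N \<subseteq> {f a}" by auto
  then show ?thesis by (meson negligible_finite negligible_subset finite.intros)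
next
  case True
  show ?thesis unfolding negligible_outer_le
  proof (intro allI impI)
    fix e :: real assume "e > 0"
    note AC = ac[unfolded abs_cont_on_def, rule_format, OF \<open>e>0\<close>]
    obtain d where d: "d > 0" and H: "\<forall>n (a'::nat\<Rightarrow>real) b'.
        (\<forall>i<n. a' i \<le> b' i \<and> {a' i..b' i} \<subseteq> {a..b}) \<and>
        (\<forall>i<n. \<forall>j<n. i \<noteq> j \<longrightarrow> b' i \<le> a' j \<or> b' j \<le> a' i) \<and>
        (\<Sum>i<n. b' i - a' i) < d
        \<longrightarrow> (\<Sum>i<n. \<bar>f (b' i) - f (a' i)\<bar>) < e"
      apply (insert AC) apply (erule exE) apply (erule conjE) apply (rule that) apply assumption apply assumption done
    have Nm: "N \<in> lmeasurable" and N0: "measure lebesgue N = 0"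
      using N(1) negligible_imp_measurable negligible_imp_measure0 by auto
    obtain \<D> where cnt: "countable \<D>"
        and Dsub: "\<And>K. K \<in> \<D> \<Longrightarrow> K \<subseteq> cbox a b \<and> K \<noteq> {} \<and> (\<exists>c d. K = cbox c d)"
        and pw: "pairwise (\<lambda>A B. interior A \<inter> interior B = {}) \<D>"
        and intne: "\<And>K. \<lbrakk>K \<in> \<D>; box a b \<noteq> {}\<rbrakk> \<Longrightarrow> interior K \<noteq> {}"
        and cov: "N \<subseteq> \<Union>\<D>" and Um: "\<Union>\<D> \<in> lmeasurable"
        and Ule: "measure lebesgue (\<Union>\<D>) \<le> measure lebesgue N + d/2"
    proof -
      have "N \<subseteq> cbox a b" using N(2) by simp
      show ?thesis
        apply (rule measurable_outer_intervals_bounded[OF Nm \<open>N \<subseteq> cbox a b\<close>, of "d/2"])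
        using d apply simp
        apply (rule that) apply assumption+ done
    qed
    have Ksub: "K \<subseteq> {a..b}" if "K \<in> \<D>" for K using Dsub[OF that] by simp
    have "\<forall>K\<in>\<D>. \<exists>c d. K = {c..d} \<and> c < d"
    proof
      fix K assume K: "K \<in> \<D>"
      then obtain c d where cd: "K = cbox c d" using Dsub by blast
      have "interior K \<noteq> {}" using intne[OF K] True by simp
      then have "c < d" using cd by (auto simp: cbox_interval)
      then show "\<exists>c d. K = {c..d} \<and> c < d" using cd by (auto simp: cbox_interval)
    qed
    then obtain lo hi where lohi: "\<And>K. K \<in> \<D> \<Longrightarrow> K = {lo K..hi K} \<and> lo K < hi K"
      by metis
    have "\<forall>K\<in>\<D>. \<exists>u w. u \<in> K \<and> w \<in> K \<and> (\<forall>x\<in>K. f u \<le> f x \<and> f x \<le> f w)"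
    proof
      fix K assume K: "K \<in> \<D>"
      have cK: "compact K" "K \<noteq> {}" using lohi[OF K] by (metis compact_Icc, auto)
      have fK: "continuous_on K f" using cont Ksub[OF K] continuous_on_subset by blast
      obtain u where "u \<in> K" "\<forall>x\<in>K. f u \<le> f x" using continuous_attains_inf[OF cK fK] by blast
      moreover obtain w where "w \<in> K" "\<forall>x\<in>K. f x \<le> f w" using continuous_attains_sup[OF cK fK] by blast
      ultimately show "\<exists>u w. u \<in> K \<and> w \<in> K \<and> (\<forall>x\<in>K. f u \<le> f x \<and> f x \<le> f w)" by blast
    qed
    then obtain u w where uw: "\<And>K. K \<in> \<D> \<Longrightarrow> u K \<in> K \<and> w K \<in> K \<and> (\<forall>x\<in>K. f (u K) \<le> f x \<and> f x \<le> f (w K))"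
      by metis
    have fKm: "f ` K \<in> lmeasurable" if "K \<in> \<D>" for K
    proof -
      have "compact K" using lohi[OF that] by (metis compact_Icc)
      moreover have "continuous_on K f" using cont Ksub[OF that] continuous_on_subset by blast
      ultimately show ?thesis by (intro lmeasurable_compact compact_continuous_image)
    qed
    have fKle: "measure lebesgue (f ` K) \<le> \<bar>f (w K) - f (u K)\<bar>" if "K \<in> \<D>" for K
    proof -
      have "f ` K \<subseteq> {f (u K)..f (w K)}" using uw[OF that] by auto
      then have "measure lebesgue (f ` K) \<le> measure lebesgue {f (u K)..f (w K)}"
        using fKm[OF that] by (intro measure_mono_fmeasurable) (auto intro: fmeasurableD)
      also have "\<dots> = f (w K) - f (u K)" using uw[OF that] lohi[OF that] by auto
      finally show ?thesis by simp
    qed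
    have sumle: "(\<Sum>K\<in>I. measure lebesgue (f ` K)) < e" if I: "I \<subseteq> \<D>" "finite I" for I
    proof -
      obtain g where g: "bij_betw g {0..<card I} I" using ex_bij_betw_nat_finite[OF I(2)] by blast
      define n where "n = card I"
      define \<alpha> where "\<alpha> i = min (u (g i)) (w (g i))" for i
      define \<beta> where "\<beta> i = max (u (g i)) (w (g i))" for i
      have gD: "g i \<in> \<D>" if "i < n" for i using g I that unfolding n_def bij_betw_def by auto
      have ab_in: "\<alpha> i \<in> g i" "\<beta> i \<in> g i" if "i < n" for i
        using uw[OF gD[OF that]] unfolding \<alpha>_def \<beta>_def by (auto simp: min_def max_def)
      have c1: "\<forall>i<n. \<alpha> i \<le> \<beta> i \<and> {\<alpha> i..\<beta> i} \<subseteq> {a..b}"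
      proof (intro allI impI conjI)
        fix i assume i: "i < n"
        show "\<alpha> i \<le> \<beta> i" unfolding \<alpha>_def \<beta>_def by simp
        show "{\<alpha> i..\<beta> i} \<subseteq> {a..b}" using ab_in[OF i] Ksub[OF gD[OF i]] by auto
      qed
      have c2: "\<forall>i<n. \<forall>j<n. i \<noteq> j \<longrightarrow> \<beta> i \<le> \<alpha> j \<or> \<beta> j \<le> \<alpha> i"
      proof (intro allI impI)
        fix i j assume ij: "i < n" "j < n" "i \<noteq> j"
        have "g i \<noteq> g j" using g ij unfolding bij_betw_def inj_on_def n_def by auto
        then have "interior (g i) \<inter> interior (g j) = {}"
          using pw gD[OF ij(1)] gD[OF ij(2)] unfolding pairwise_def by blast
        then have "hi (g i) \<le> lo (g j) \<or> hi (g j) \<le> lo (g i)"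
          using lohi[OF gD[OF ij(1)]] lohi[OF gD[OF ij(2)]]
          by (metis interior_atLeastAtMost_real nonoverlap_real)
        moreover have "\<alpha> i \<in> {lo (g i)..hi (g i)}" "\<beta> i \<in> {lo (g i)..hi (g i)}"
          "\<alpha> j \<in> {lo (g j)..hi (g j)}" "\<beta> j \<in> {lo (g j)..hi (g j)}"
          using ab_in[OF ij(1)] ab_in[OF ij(2)] lohi[OF gD[OF ij(1)]] lohi[OF gD[OF ij(2)]] by metis+
        ultimately show "\<beta> i \<le> \<alpha> j \<or> \<beta> j \<le> \<alpha> i"
          by auto
      qed
      have "(\<Sum>i<n. \<beta> i - \<alpha> i) \<le> (\<Sum>i<n. hi (g i) - lo (g i))"
      proof (rule sum_mono)
        fix i assume "i \<in> {..<n}"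
        then have i: "i < n" by simp
        have "\<alpha> i \<in> {lo (g i)..hi (g i)}" "\<beta> i \<in> {lo (g i)..hi (g i)}"
          using ab_in[OF i] lohi[OF gD[OF i]] by metis+
        then show "\<beta> i - \<alpha> i \<le> hi (g i) - lo (g i)" by auto
      qed
      also have "\<dots> = (\<Sum>K\<in>I. hi K - lo K)"
        using sum.reindex_bij_betw[OF g, of "\<lambda>K. hi K - lo K"] by (simp add: n_def atLeast0LessThan)
      also have "\<dots> = (\<Sum>K\<in>I. measure lebesgue K)"
      proof (rule sum.cong)
        fix K assume "K \<in> I"
        then have "K \<in> \<D>" using I by auto
        then show "hi K - lo K = measure lebesgue K" using lohi[of K]
          by (metis less_imp_le measure_completion measure_lborel_Icc sets_lborel atLeastAtMost_borel)
      qed simp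
      also have "\<dots> = measure lebesgue (\<Union>I)"
      proof (rule measure_negligible_finite_Union[symmetric])
        show "finite I" by fact
        show "S \<in> lmeasurable" if "S \<in> I" for S using that I lohi by (metis lmeasurable_cbox cbox_interval subsetD)
        show "pairwise (\<lambda>S T. negligible (S \<inter> T)) I"
        proof (clarsimp simp: pairwise_def)
          fix S T assume ST: "S \<in> I" "T \<in> I" "S \<noteq> T"
          then have SD: "S \<in> \<D>" "T \<in> \<D>" using I by auto
          then have "interior S \<inter> interior T = {}" using pw ST unfolding pairwise_def by blast
          then have "hi S \<le> lo T \<or> hi T \<le> lo S"
            using lohi[OF SD(1)] lohi[OF SD(2)] by (metis interior_atLeastAtMost_real nonoverlap_real)
          have "S \<inter> T \<subseteq> {hi S, hi T}"
          proof
            fix x assume "x \<in> S \<inter> T"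
            then have "x \<in> {lo S..hi S}" "x \<in> {lo T..hi T}"
              using lohi[OF SD(1)] lohi[OF SD(2)] by (metis IntD1 IntD2)+
            then show "x \<in> {hi S, hi T}" using \<open>hi S \<le> lo T \<or> hi T \<le> lo S\<close> by auto
          qed
          then show "negligible (S \<inter> T)" by (meson negligible_finite negligible_subset finite.intros)
        qed
      qed
      also have "\<dots> \<le> measure lebesgue (\<Union>\<D>)"
      proof (rule measure_mono_fmeasurable[OF _ _ Um])
        show "\<Union>I \<subseteq> \<Union>\<D>" using I by auto
        have "K \<in> sets lebesgue" if "K \<in> I" for K
          using that I lohi by (metis lmeasurable_cbox cbox_interval fmeasurableD subsetD)
        then show "\<Union>I \<in> sets lebesgue" using I by (intro sets.finite_Union) auto
      qed
      also have "\<dots> < d" using Ule N0 d by simp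
      finally have c3: "(\<Sum>i<n. \<beta> i - \<alpha> i) < d" .
      have lt: "(\<Sum>i<n. \<bar>f (\<beta> i) - f (\<alpha> i)\<bar>) < e"
        using H c1 c2 c3 by blast
      have "(\<Sum>K\<in>I. measure lebesgue (f ` K)) = (\<Sum>i<n. measure lebesgue (f ` g i))"
        using sum.reindex_bij_betw[OF g, of "\<lambda>K. measure lebesgue (f ` K)"] by (simp add: n_def atLeast0LessThan)
      also have "\<dots> \<le> (\<Sum>i<n. \<bar>f (\<beta> i) - f (\<alpha> i)\<bar>)"
      proof (rule sum_mono)
        fix i assume "i \<in> {..<n}"
        then have i: "i < n" by simp
        have "\<bar>f (\<beta> i) - f (\<alpha> i)\<bar> = \<bar>f (w (g i)) - f (u (g i))\<bar>"
          unfolding \<alpha>_def \<beta>_def by (auto simp: min_def max_def)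
        then show "measure lebesgue (f ` g i) \<le> \<bar>f (\<beta> i) - f (\<alpha> i)\<bar>"
          using fKle[OF gD[OF i]] by simp
      qed
      finally show ?thesis using lt by simp
    qed
    have T1: "(\<Union>K\<in>\<D>. f ` K) \<in> fmeasurable lebesgue" and T2: "measure lebesgue (\<Union>K\<in>\<D>. f ` K) \<le> e"
    proof -
      have bound: "measure lebesgue (\<Union>K\<in>I. f ` K) \<le> e" if "I \<subseteq> \<D>" "finite I" for I
      proof -
        have "measure lebesgue (\<Union>K\<in>I. f ` K) \<le> (\<Sum>K\<in>I. measure lebesgue (f ` K))"
          using that fKm by (intro measure_UNION_le) auto
        also have "\<dots> \<le> e" using sumle[OF that] by simp
        finally show ?thesis .
      qed
      show "(\<Union>K\<in>\<D>. f ` K) \<in> fmeasurable lebesgue"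
        using fmeasurable_UN_bound[OF cnt fKm bound] by blast
      show "measure lebesgue (\<Union>K\<in>\<D>. f ` K) \<le> e"
        using measure_UN_bound[OF cnt fKm bound] by blast
    qed
    show "\<exists>T. f ` N \<subseteq> T \<and> T \<in> lmeasurable \<and> measure lebesgue T \<le> e"
      using T1 T2 cov by (intro exI[of _ "\<Union>K\<in>\<D>. f ` K"]) auto
  qed
qed



lemma image_measure_le:
  fixes f f' :: "real \<Rightarrow> real"
  assumes D: "D \<in> sets lebesgue"
    and der: "\<And>x. x \<in> D \<Longrightarrow> (f has_real_derivative f' x) (at x within D)"
    and int: "(\<lambda>x. \<bar>f' x\<bar>) integrable_on D"
  shows "f ` D \<in> lmeasurable \<and> measure lebesgue (f ` D) \<le> integral D (\<lambda>x. \<bar>f' x\<bar>)"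
proof -
  let ?g = "\<lambda>x::real^1. (vec (f (x$1)) :: real^1)"
  let ?S = "(vec ` D :: (real^1) set)"
  have S: "?S \<in> sets lebesgue"
    by (auto intro: differentiable_image_in_sets_lebesgue [OF D] differentiable_vec)
  have "((\<lambda>x. vec (f (x $ 1))) has_derivative (*\<^sub>R) (f' z)) (at (vec z) within ?S)"
    if "z \<in> D" for z
    using der [OF that] unfolding has_real_derivative_iff_has_vector_derivative
    by (simp add: has_vector_derivative_def has_derivative_vector_1)
  then have der': "\<And>x. x \<in> ?S \<Longrightarrow> (?g has_derivative (*\<^sub>R) (f' (x$1))) (at x within ?S)"
    by auto
  have eqf: "(\<lambda>x::real^1. \<bar>det (matrix ((*\<^sub>R) (f' (x$1))) :: real^1^1)\<bar> * 1) = (\<lambda>x. \<bar>f' (x$1)\<bar>)"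
    by simp
  have img1: "(\<lambda>x. x $ 1) ` ?S = D" by (auto simp: image_iff)
  have "((\<lambda>x::real^1. \<bar>f' (x$1)\<bar>) has_integral integral D (\<lambda>x. \<bar>f' x\<bar>)) ?S"
    by (rule has_integral_vec1_D) (use int img1 in \<open>auto simp: o_def\<close>)
  then have intS: "(\<lambda>x::real^1. \<bar>det (matrix ((*\<^sub>R) (f' (x$1))) :: real^1^1)\<bar> * 1) integrable_on ?S"
    and intSv: "integral ?S (\<lambda>x::real^1. \<bar>det (matrix ((*\<^sub>R) (f' (x$1))) :: real^1^1)\<bar> * 1) = integral D (\<lambda>x. \<bar>f' x\<bar>)"
    unfolding eqf by (auto simp: has_integral_iff)
  have R: "(\<lambda>_. 1::real) integrable_on ?g ` ?S \<and>
      integral (?g ` ?S) (\<lambda>_. 1::real) \<le> integral ?S (\<lambda>x::real^1. \<bar>det (matrix ((*\<^sub>R) (f' (x$1))) :: real^1^1)\<bar> * 1)"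
    by (rule integral_on_image_ubound_nonneg[of ?S "\<lambda>_. 1::real" ?g, OF _ der' intS]) auto
  have gS: "?g ` ?S = vec ` (f ` D)" by (auto simp: image_iff)
  have img2: "(\<lambda>x. x $ 1) ` (vec ` (f ` D) :: (real^1) set) = f ` D" by (auto simp: image_iff)
  from R obtain I where I: "((\<lambda>_. 1::real) has_integral I) (vec ` (f ` D) :: (real^1) set)" and Ile: "I \<le> integral D (\<lambda>x. \<bar>f' x\<bar>)"
    unfolding gS intSv by (auto simp: has_integral_iff)
  from has_integral_vec1_I[OF I] img2 have "((\<lambda>_. 1::real) has_integral I) (f ` D)" by (simp add: o_def)
  then have "f ` D \<in> lmeasurable" and "measure lebesgue (f ` D) = I"
    using lmeasurable_iff_integrable_on lmeasure_integral by (auto simp: has_integral_iff)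
  then show ?thesis using Ile by simp
qed



lemma ftc_ineq:
  fixes f f' :: "real \<Rightarrow> real"
  assumes ac: "abs_continuous f" and f'm: "f' \<in> borel_measurable borel"
    and der: "AE x in lborel. (f has_real_derivative f' x) (at x)" and ab: "a \<le> b"
  shows "ennreal \<bar>f b - f a\<bar> \<le> (\<integral>\<^sup>+x. indicator {a<..<b} x * ennreal \<bar>f' x\<bar> \<partial>lborel)"
proof (cases "(\<integral>\<^sup>+x. indicator {a<..<b} x * ennreal \<bar>f' x\<bar> \<partial>lborel) = \<infinity>")
  case True then show ?thesis by simp
next
  case False
  let ?U = "{a<..<b}"
  have eqi: "(\<integral>\<^sup>+x. ennreal (norm (indicator ?U x *\<^sub>R \<bar>f' x\<bar>)) \<partial>lborel) = (\<integral>\<^sup>+x. indicator ?U x * ennreal \<bar>f' x\<bar> \<partial>lborel)"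
    by (intro nn_integral_cong) (auto split: split_indicator)
  have si: "set_integrable lborel ?U (\<lambda>x. \<bar>f' x\<bar>)"
    unfolding set_integrable_def integrable_iff_bounded
    using False f'm eqi by (auto simp: top.not_eq_extremum)
  have intU: "(\<lambda>x. \<bar>f' x\<bar>) integrable_on ?U" using set_borel_integral_eq_integral(1)[OF si] .
  have nnU: "(\<integral>\<^sup>+x. indicator ?U x * ennreal \<bar>f' x\<bar> \<partial>lborel) = ennreal (integral ?U (\<lambda>x. \<bar>f' x\<bar>))"
  proof -
    have "(\<integral>\<^sup>+x. indicator ?U x * ennreal \<bar>f' x\<bar> \<partial>lborel) = (\<integral>\<^sup>+x. ennreal (indicator ?U x * \<bar>f' x\<bar>) \<partial>lborel)"
      by (intro nn_integral_cong) (auto split: split_indicator)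
    also have "\<dots> = ennreal (integral ?U (\<lambda>x. \<bar>f' x\<bar>))"
      using nn_integral_has_integral_lebesgue[of ?U "\<lambda>x. \<bar>f' x\<bar>"] intU by auto
    finally show ?thesis .
  qed
  obtain N where Nd: "\<And>x. x \<in> space lborel - N \<Longrightarrow> (f has_real_derivative f' x) (at x)"
    and Nn: "N \<in> null_sets lborel"
    apply (rule AE_E3[OF der]) apply (rule that) apply assumption+ done
  have Nb: "N \<in> sets borel" using Nn by (auto simp: null_sets_def)
  define D where "D = ?U - N"
  have Db: "D \<in> sets borel" unfolding D_def using Nb by auto
  have Dl: "D \<in> sets lebesgue" using Db by (simp add: D_def)
  have derD: "(f has_real_derivative f' x) (at x within D)" if "x \<in> D" for x
    using Nd[of x] that unfolding D_def by (auto intro: has_field_derivative_at_within)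
  have siD: "set_integrable lborel D (\<lambda>x. \<bar>f' x\<bar>)"
    by (rule set_integrable_subset[OF si]) (use Db in \<open>auto simp: D_def\<close>)
  have intD: "(\<lambda>x. \<bar>f' x\<bar>) integrable_on D" using set_borel_integral_eq_integral(1)[OF siD] .
  have img: "f ` D \<in> lmeasurable" "measure lebesgue (f ` D) \<le> integral D (\<lambda>x. \<bar>f' x\<bar>)"
    using image_measure_le[OF Dl derD intD] by auto
  have DU: "integral D (\<lambda>x. \<bar>f' x\<bar>) \<le> integral ?U (\<lambda>x. \<bar>f' x\<bar>)"
    by (rule integral_subset_le) (use intD intU in \<open>auto simp: D_def\<close>)
  have cont: "continuous_on {a..b} f" using ac by (rule abs_continuous_cont)
  have negN: "negligible (N \<inter> {a..b})"
  proof -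
    have "N \<in> null_sets lebesgue" using Nn by (rule null_sets_completionI)
    then have "negligible N" by (simp add: negligible_iff_null_sets)
    then show ?thesis by (rule negligible_subset) auto
  qed
  have Z: "negligible (f ` (N \<inter> {a..b}))"
    by (rule luzin_N[OF _ cont negN]) (use ac in \<open>auto simp: abs_continuous_def\<close>)
  define W where "W = f ` (N \<inter> {a..b}) \<union> {f a, f b}"
  have Wn: "negligible W" unfolding W_def using Z by (auto intro: negligible_Un)
  have sub1: "f ` {a..b} \<subseteq> f ` D \<union> W"
  proof
    fix y assume "y \<in> f ` {a..b}"
    then obtain x where x: "x \<in> {a..b}" "y = f x" by auto
    show "y \<in> f ` D \<union> W"
    proof (cases "x = a \<or> x = b")
      case True then show ?thesis using x unfolding W_def by auto
    next
      case False
      then have "x \<in> ?U" using x by auto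
      then show ?thesis using x unfolding W_def D_def by auto
    qed
  qed
  let ?J = "{min (f a) (f b)..max (f a) (f b)}"
  have conn: "connected (f ` {a..b})" by (rule connected_continuous_image[OF cont connected_Icc])
  have "f a \<in> f ` {a..b}" "f b \<in> f ` {a..b}" using ab by auto
  then have "?J \<subseteq> f ` {a..b}" using conn connected_contains_Icc
    by (metis (no_types, lifting) max_def min_def)
  then have Jsub: "?J \<subseteq> f ` D \<union> W" using sub1 by blast
  have Wl: "W \<in> lmeasurable" "measure lebesgue W = 0"
    using Wn negligible_imp_measurable negligible_imp_measure0 by auto
  have "\<bar>f b - f a\<bar> = measure lebesgue ?J"
    by (simp add: measure_completion) (auto simp: min_def max_def)
  also have "\<dots> \<le> measure lebesgue (f ` D \<union> W)"
    by (intro measure_mono_fmeasurable Jsub) (use img Wl in \<open>auto intro: fmeasurable.Un\<close>)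
  also have "\<dots> \<le> measure lebesgue (f ` D) + measure lebesgue W"
    using img Wl by (intro measure_Un_le) (auto intro: fmeasurableD)
  also have "\<dots> \<le> integral ?U (\<lambda>x. \<bar>f' x\<bar>)" using img Wl DU by simp
  finally show ?thesis unfolding nnU by (simp add: ennreal_leI)
qed



locale setting =
  fixes p dp \<psi> :: "real \<Rightarrow> real" and t0 :: real
  assumes p_nonneg: "\<And>z. p z \<ge> 0"
    and p_int: "integrable lborel p"
    and p_one: "(\<integral>z. p z \<partial>lborel) = 1"
    and p_ac: "abs_continuous p"
    and dp_meas[measurable]: "dp \<in> borel_measurable borel"
    and dp_deriv: "AE z in lborel. (p has_real_derivative dp z) (at z)"
    and fisher: "fisher_info p dp < \<infinity>"
    and psi_dec: "antimono \<psi>"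
    and psi_rc: "\<And>x. continuous (at_right x) \<psi>"
    and t0_pos: "t0 > 0"
    and psi_sq: "\<And>t. t \<in> {-t0, t0} \<Longrightarrow> (\<integral>\<^sup>+ z. ennreal ((\<psi> (z - t))\<^sup>2 * p z) \<partial>lborel) < \<infinity>"
begin

abbreviation "\<mu> \<equiv> LS_measure_dec \<psi>"

lemma F_mono: "x \<le> y \<Longrightarrow> - \<psi> x \<le> - \<psi> y"
  using psi_dec by (auto simp: antimono_def)

lemma psi_le: "x \<le> y \<Longrightarrow> \<psi> y \<le> \<psi> x"
  using psi_dec by (auto simp: antimono_def)

lemma F_rc: "continuous (at_right a) (\<lambda>x. - \<psi> x)"
  using psi_rc by (intro continuous_minus) auto

lemma sets_mu[simp, measurable_cong]: "sets \<mu> = sets borel"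
  by (simp add: LS_measure_dec_def)

lemma space_mu[simp]: "space \<mu> = UNIV"
  by (simp add: LS_measure_dec_def)

lemma mu_Ioc: assumes "a \<le> b" shows "emeasure \<mu> {a<..b} = ennreal (\<psi> a - \<psi> b)"
proof -
  have "emeasure (interval_measure (\<lambda>x. - \<psi> x)) {a<..b} = ennreal (- \<psi> b - - \<psi> a)"
    by (rule emeasure_interval_measure_Ioc[OF assms F_mono F_rc])
  then show ?thesis unfolding LS_measure_dec_def by simp
qed

lemma mu_sigma_finite: "sigma_finite_measure \<mu>"
  unfolding LS_measure_dec_def by (rule sigma_finite_interval_measure[OF F_mono F_rc])

lemma psi_meas[measurable]: "\<psi> \<in> borel_measurable borel"
proof -
  have "(\<lambda>x. - \<psi> x) \<in> borel_measurable borel"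
    by (rule borel_measurable_mono) (auto simp: mono_def psi_le)
  then have "(\<lambda>x. - (- \<psi> x)) \<in> borel_measurable borel" by measurable
  then show ?thesis by simp
qed

lemma p_isCont: "isCont p x"
  using p_ac by (rule abs_continuous_isCont)

lemma p_meas[measurable]: "p \<in> borel_measurable borel"
  by (rule borel_measurable_continuous_onI) (simp add: continuous_at_imp_continuous_on p_isCont)

lemma ftc_sym: "ennreal \<bar>p y - p x\<bar> \<le> (\<integral>\<^sup>+z. indicator {min x y<..<max x y} z * ennreal \<bar>dp z\<bar> \<partial>lborel)"
proof (cases "x \<le> y")
  case True
  then show ?thesis using ftc_ineq[OF p_ac dp_meas dp_deriv True] by (simp add: min_def max_def)
next
  case False
  then have "y \<le> x" by simp
  then show ?thesis using ftc_ineq[OF p_ac dp_meas dp_deriv \<open>y \<le> x\<close>] False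
    by (simp add: min_def max_def abs_minus_commute)
qed

lemma ftc_ball:
  assumes "dist y z \<le> v"
  shows "ennreal \<bar>p z - p y\<bar> \<le> (\<integral>\<^sup>+w. indicator (ball y v) w * ennreal \<bar>dp w\<bar> \<partial>lborel)"
proof -
  have "ennreal \<bar>p z - p y\<bar> \<le> (\<integral>\<^sup>+w. indicator {min y z<..<max y z} w * ennreal \<bar>dp w\<bar> \<partial>lborel)"
    by (rule ftc_sym)
  also have "\<dots> \<le> (\<integral>\<^sup>+w. indicator (ball y v) w * ennreal \<bar>dp w\<bar> \<partial>lborel)"
  proof (intro nn_integral_mono)
    fix w
    have "{min y z<..<max y z} \<subseteq> ball y v" using assms by (auto simp: dist_real_def min_def max_def)
    then show "indicator {min y z<..<max y z} w * ennreal \<bar>dp w\<bar> \<le> indicator (ball y v) w * ennreal \<bar>dp w\<bar>"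
      by (auto split: split_indicator)
  qed
  finally show ?thesis .
qed

lemma dp_zero: "AE z in lborel. p z = 0 \<longrightarrow> dp z = 0"
  using dp_deriv
proof eventually_elim
  case (elim z)
  show ?case
  proof
    assume "p z = 0"
    then have "\<forall>y. p z \<le> p y" using p_nonneg by simp
    then show "dp z = 0"
      by (intro DERIV_local_min[OF elim, of 1]) auto
  qed
qed

definition "I = fisher_info p dp"

lemma amgm:
  fixes c :: "real \<Rightarrow> real"
  assumes [measurable]: "c \<in> borel_measurable borel"
  shows "(\<integral>\<^sup>+z. ennreal (\<bar>dp z\<bar> * \<bar>c z\<bar>) \<partial>lborel) \<le> I + (\<integral>\<^sup>+z. ennreal ((c z)\<^sup>2 * p z) \<partial>lborel)"
proof -
  have "(\<integral>\<^sup>+z. ennreal (\<bar>dp z\<bar> * \<bar>c z\<bar>) \<partial>lborel) \<le>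
        (\<integral>\<^sup>+z. indicator {x. p x > 0} z * ennreal ((dp z)\<^sup>2 / p z) + ennreal ((c z)\<^sup>2 * p z) \<partial>lborel)"
    using dp_zero
  proof (intro nn_integral_mono_AE, eventually_elim)
    case (elim z)
    show ?case
    proof (cases "p z > 0")
      case True
      have "\<bar>dp z\<bar> * \<bar>c z\<bar> \<le> (dp z)\<^sup>2 / p z + (c z)\<^sup>2 * p z"
      proof -
        have "0 \<le> (\<bar>dp z\<bar> - \<bar>c z\<bar> * p z)\<^sup>2" by simp
        then have "2 * (\<bar>dp z\<bar> * \<bar>c z\<bar>) * p z \<le> (dp z)\<^sup>2 + (c z)\<^sup>2 * (p z)\<^sup>2"
          by (simp add: power2_eq_square algebra_simps)
        then have "2 * (\<bar>dp z\<bar> * \<bar>c z\<bar>) \<le> ((dp z)\<^sup>2 + (c z)\<^sup>2 * (p z)\<^sup>2) / p z"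
          using True by (simp add: field_simps)
        also have "\<dots> = (dp z)\<^sup>2 / p z + (c z)\<^sup>2 * p z"
          using True by (simp add: field_simps power2_eq_square)
        finally show ?thesis
          using True by (smt (verit) divide_nonneg_pos mult_nonneg_nonneg p_nonneg zero_le_power2 abs_ge_zero)
      qed
      then show ?thesis using True
        by (simp add: ennreal_plus[symmetric] del: ennreal_plus)
    next
      case False
      then have "p z = 0" using p_nonneg[of z] by simp
      then show ?thesis using elim by simp
    qed
  qed
  also have "\<dots> = I + (\<integral>\<^sup>+z. ennreal ((c z)\<^sup>2 * p z) \<partial>lborel)"
    unfolding I_def fisher_info_def by (intro nn_integral_add) auto
  finally show ?thesis .
qed

end



context setting begin

definition "g z = \<bar>\<psi> (z - t0)\<bar> + \<bar>\<psi> (z + t0)\<bar>"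
definition "H z = (\<psi> (z - t0))\<^sup>2 + (\<psi> (z + t0))\<^sup>2"

lemma g_meas[measurable]: "g \<in> borel_measurable borel" unfolding g_def by measurable
lemma H_meas[measurable]: "H \<in> borel_measurable borel" unfolding H_def by measurable

lemma psi_between:
  assumes "\<bar>t\<bar> \<le> t0"
  shows "\<psi> (z + t0) \<le> \<psi> (z - t)" "\<psi> (z - t) \<le> \<psi> (z - t0)"
  using assms by (auto intro!: psi_le)

lemma abs_psi_le_g: "\<bar>t\<bar> \<le> t0 \<Longrightarrow> \<bar>\<psi> (z - t)\<bar> \<le> g z"
  using psi_between[of t z] unfolding g_def by linarith

lemma g_nonneg: "g z \<ge> 0" unfolding g_def by simp

lemma psi_sq_le_H: "\<bar>t\<bar> \<le> t0 \<Longrightarrow> (\<psi> (z - t))\<^sup>2 \<le> H z"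
proof -
  assume t: "\<bar>t\<bar> \<le> t0"
  have "\<bar>\<psi> (z - t)\<bar> \<le> max \<bar>\<psi> (z - t0)\<bar> \<bar>\<psi> (z + t0)\<bar>"
    using psi_between[OF t, of z] by linarith
  then have "\<bar>\<psi> (z - t)\<bar>\<^sup>2 \<le> (max \<bar>\<psi> (z - t0)\<bar> \<bar>\<psi> (z + t0)\<bar>)\<^sup>2"
    by (intro power_mono) auto
  also have "\<dots> \<le> H z" unfolding H_def by (auto simp: max_def)
  finally show ?thesis by simp
qed

lemma fin_le:
  assumes "\<And>z. f z \<le> h z" "(\<integral>\<^sup>+z. h z \<partial>lborel) < \<infinity>"
  shows "(\<integral>\<^sup>+z. f z \<partial>lborel) < \<infinity>"
  using nn_integral_mono[of lborel f h] assms by (meson le_less_trans)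

lemma fin_p: "(\<integral>\<^sup>+z. ennreal (p z) \<partial>lborel) = 1"
  using nn_integral_eq_integral[OF p_int] p_nonneg p_one by simp

lemma fin_H: "(\<integral>\<^sup>+z. ennreal (H z * p z) \<partial>lborel) < \<infinity>"
proof -
  have a: "(\<integral>\<^sup>+ z. ennreal ((\<psi> (z - t0))\<^sup>2 * p z) \<partial>lborel) < \<infinity>" using psi_sq[of t0] by simp
  have b: "(\<integral>\<^sup>+ z. ennreal ((\<psi> (z + t0))\<^sup>2 * p z) \<partial>lborel) < \<infinity>" using psi_sq[of "-t0"] by simp
  have "(\<integral>\<^sup>+z. ennreal (H z * p z) \<partial>lborel) =
    (\<integral>\<^sup>+ z. ennreal ((\<psi> (z - t0))\<^sup>2 * p z) + ennreal ((\<psi> (z + t0))\<^sup>2 * p z) \<partial>lborel)"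
    unfolding H_def using p_nonneg by (intro nn_integral_cong) (simp add: ennreal_plus[symmetric] distrib_right del: ennreal_plus)
  also have "\<dots> = (\<integral>\<^sup>+ z. ennreal ((\<psi> (z - t0))\<^sup>2 * p z) \<partial>lborel) + (\<integral>\<^sup>+ z. ennreal ((\<psi> (z + t0))\<^sup>2 * p z) \<partial>lborel)"
    by (intro nn_integral_add) auto
  finally show ?thesis using a b by (simp add: less_top)
qed

lemma sq_sum_le: "(\<bar>a\<bar> + \<bar>b\<bar>)\<^sup>2 \<le> 2 * (a\<^sup>2 + b\<^sup>2)" for a b :: real
proof -
  have "0 \<le> (\<bar>a\<bar> - \<bar>b\<bar>)\<^sup>2" by simp
  then show ?thesis by (simp add: power2_eq_square algebra_simps abs_mult_self_eq)
qed

lemma H_nonneg: "H z \<ge> 0" unfolding H_def by simp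

lemma g2_le: "(g z)\<^sup>2 \<le> 2 * H z"
  unfolding g_def H_def by (rule sq_sum_le)

lemma fin_g2: "(\<integral>\<^sup>+z. ennreal ((g z)\<^sup>2 * p z) \<partial>lborel) < \<infinity>"
proof -
  have e: "ennreal (2 * (H z * p z)) = 2 * ennreal (H z * p z)" for z
    using H_nonneg[of z] p_nonneg[of z] by (simp add: ennreal_mult)
  have "(\<integral>\<^sup>+z. ennreal (2 * (H z * p z)) \<partial>lborel) = 2 * (\<integral>\<^sup>+z. ennreal (H z * p z) \<partial>lborel)"
    unfolding e by (rule nn_integral_cmult) measurable
  then have f2: "(\<integral>\<^sup>+z. ennreal (2 * (H z * p z)) \<partial>lborel) < \<infinity>"
    using fin_H by (simp add: ennreal_mult_less_top)
  show ?thesis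
  proof (rule fin_le[OF _ f2])
    fix z show "ennreal ((g z)\<^sup>2 * p z) \<le> ennreal (2 * (H z * p z))"
      using mult_right_mono[OF g2_le[of z] p_nonneg[of z]] by (intro ennreal_leI) (simp add: mult.assoc)
  qed
qed

lemma fin_gp: "(\<integral>\<^sup>+z. ennreal (g z * p z) \<partial>lborel) < \<infinity>"
proof -
  have "(\<integral>\<^sup>+z. ennreal ((g z)\<^sup>2 * p z) + ennreal (p z) \<partial>lborel) =
        (\<integral>\<^sup>+z. ennreal ((g z)\<^sup>2 * p z) \<partial>lborel) + (\<integral>\<^sup>+z. ennreal (p z) \<partial>lborel)"
    by (intro nn_integral_add) auto
  then have f2: "(\<integral>\<^sup>+z. ennreal ((g z)\<^sup>2 * p z) + ennreal (p z) \<partial>lborel) < \<infinity>"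
    using fin_g2 fin_p by (simp add: less_top)
  show ?thesis
  proof (rule fin_le[OF _ f2])
    fix z
    have "0 \<le> (g z - 1/2)\<^sup>2" by simp
    then have "g z \<le> (g z)\<^sup>2 + 1" by (simp add: power2_eq_square algebra_simps)
    then have "g z * p z \<le> ((g z)\<^sup>2 + 1) * p z"
      using p_nonneg[of z] by (rule mult_right_mono)
    then have "g z * p z \<le> (g z)\<^sup>2 * p z + p z" by (simp add: distrib_right)
    then show "ennreal (g z * p z) \<le> ennreal ((g z)\<^sup>2 * p z) + ennreal (p z)"
      using p_nonneg[of z] g_nonneg[of z] by (simp add: ennreal_plus[symmetric] del: ennreal_plus)
  qed
qed

lemma I_fin: "I < \<infinity>" unfolding I_def using fisher .

lemma fin_dpg: "(\<integral>\<^sup>+z. ennreal (\<bar>dp z\<bar> * g z) \<partial>lborel) < \<infinity>"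
proof -
  have "(\<integral>\<^sup>+z. ennreal (\<bar>dp z\<bar> * \<bar>g z\<bar>) \<partial>lborel) \<le> I + (\<integral>\<^sup>+z. ennreal ((g z)\<^sup>2 * p z) \<partial>lborel)"
    by (rule amgm) measurable
  moreover have "I + (\<integral>\<^sup>+z. ennreal ((g z)\<^sup>2 * p z) \<partial>lborel) < \<infinity>"
    using I_fin fin_g2 by (simp add: less_top)
  ultimately show ?thesis using g_nonneg by (simp add: le_less_trans)
qed

lemma fin_dp: "(\<integral>\<^sup>+z. ennreal \<bar>dp z\<bar> \<partial>lborel) < \<infinity>"
proof -
  have "(\<integral>\<^sup>+z. ennreal (\<bar>dp z\<bar> * \<bar>1\<bar>) \<partial>lborel) \<le> I + (\<integral>\<^sup>+z. ennreal ((1)\<^sup>2 * p z) \<partial>lborel)"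
    by (rule amgm[of "\<lambda>_. 1"]) measurable
  moreover have "I + (\<integral>\<^sup>+z. ennreal ((1)\<^sup>2 * p z) \<partial>lborel) < \<infinity>"
    using I_fin fin_p by (simp add: less_top)
  ultimately show ?thesis by (simp add: le_less_trans)
qed

lemma int_psi_p: assumes "\<bar>t\<bar> \<le> t0" shows "integrable lborel (\<lambda>z. \<psi> (z - t) * p z)"
  unfolding integrable_iff_bounded
proof
  show "(\<lambda>z. \<psi> (z - t) * p z) \<in> borel_measurable lborel" by measurable
  show "(\<integral>\<^sup>+ z. ennreal (norm (\<psi> (z - t) * p z)) \<partial>lborel) < \<infinity>"
  proof (rule fin_le[OF _ fin_gp])
    fix z show "ennreal (norm (\<psi> (z - t) * p z)) \<le> ennreal (g z * p z)"
      using abs_psi_le_g[OF assms, of z] p_nonneg[of z]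
      by (intro ennreal_leI) (simp add: abs_mult mult_right_mono)
  qed
qed

end


context setting begin

lemma pair_mu: "pair_sigma_finite \<mu> lborel"
  unfolding pair_sigma_finite_def using mu_sigma_finite lborel.sigma_finite_measure_axioms by auto

lemma tonelli_psi:
  assumes st: "s \<le> t"
  shows "(\<integral>\<^sup>+ z. ennreal ((\<psi> (z - t) - \<psi> (z - s)) * p z) \<partial>lborel) =
         (\<integral>\<^sup>+ y. (\<integral>\<^sup>+ z. indicator {y+s..<y+t} z * ennreal (p z) \<partial>lborel) \<partial>\<mu>)"
proof -
  interpret pair_sigma_finite \<mu> lborel by (rule pair_mu)
  let ?f = "\<lambda>y z. indicator {x. snd x - t < fst x \<and> fst x \<le> snd x - s} (y,z) * ennreal (p z)"
  have m: "(\<lambda>(y,z). ?f y z) \<in> borel_measurable (\<mu> \<Otimes>\<^sub>M lborel)" by measurable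
  have "(\<integral>\<^sup>+ z. ennreal ((\<psi> (z - t) - \<psi> (z - s)) * p z) \<partial>lborel) = (\<integral>\<^sup>+ z. (\<integral>\<^sup>+ y. ?f y z \<partial>\<mu>) \<partial>lborel)"
  proof (intro nn_integral_cong)
    fix z
    have "(\<integral>\<^sup>+ y. ?f y z \<partial>\<mu>) = (\<integral>\<^sup>+ y. ennreal (p z) * indicator {z - t<..z - s} y \<partial>\<mu>)"
      by (intro nn_integral_cong) (auto split: split_indicator)
    also have "\<dots> = ennreal (p z) * emeasure \<mu> {z - t<..z - s}"
      by (rule nn_integral_cmult_indicator) simp
    also have "\<dots> = ennreal (p z) * ennreal (\<psi> (z - t) - \<psi> (z - s))"
      using st by (simp add: mu_Ioc)
    also have "\<dots> = ennreal ((\<psi> (z - t) - \<psi> (z - s)) * p z)"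
      using p_nonneg[of z] psi_le[of "z - t" "z - s"] st by (simp add: ennreal_mult mult.commute)
    finally show "ennreal ((\<psi> (z - t) - \<psi> (z - s)) * p z) = (\<integral>\<^sup>+ y. ?f y z \<partial>\<mu>)" by simp
  qed
  also have "\<dots> = (\<integral>\<^sup>+ y. (\<integral>\<^sup>+ z. ?f y z \<partial>lborel) \<partial>\<mu>)"
    by (rule Fubini'[OF m])
  also have "\<dots> = (\<integral>\<^sup>+ y. (\<integral>\<^sup>+ z. indicator {y+s..<y+t} z * ennreal (p z) \<partial>lborel) \<partial>\<mu>)"
    by (intro nn_integral_cong) (auto split: split_indicator)
  finally show ?thesis .
qed

definition "W v y = (\<integral>\<^sup>+ w. indicator (ball y v) w * ennreal \<bar>dp w\<bar> \<partial>lborel)"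
definition "Phi v = (\<integral>\<^sup>+ y. W v y \<partial>\<mu>)"

lemma W_meas[measurable]: "W v \<in> borel_measurable borel"
proof -
  have "(\<lambda>(y,w). indicator {x::real\<times>real. dist (fst x) (snd x) < v} (y,w) * ennreal \<bar>dp w\<bar>) \<in> borel_measurable (borel \<Otimes>\<^sub>M lborel)"
    by measurable
  then have "(\<lambda>y. \<integral>\<^sup>+ w. indicator {x::real\<times>real. dist (fst x) (snd x) < v} (y,w) * ennreal \<bar>dp w\<bar> \<partial>lborel) \<in> borel_measurable borel"
    by (rule lborel.borel_measurable_nn_integral)
  moreover have "(\<lambda>y. \<integral>\<^sup>+ w. indicator {x::real\<times>real. dist (fst x) (snd x) < v} (y,w) * ennreal \<bar>dp w\<bar> \<partial>lborel) = W v"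
    unfolding W_def by (intro ext nn_integral_cong) (auto split: split_indicator simp: dist_commute)
  ultimately show ?thesis by simp
qed

lemma Phi_eq: "Phi v = (\<integral>\<^sup>+ z. ennreal \<bar>dp z\<bar> * emeasure \<mu> (ball z v - {z}) \<partial>lborel)"
proof -
  interpret pair_sigma_finite \<mu> lborel by (rule pair_mu)
  let ?f = "\<lambda>(y::real) (w::real). indicator {x::real\<times>real. dist (fst x) (snd x) < v \<and> fst x \<noteq> snd x} (y,w) * ennreal \<bar>dp w\<bar>"
  have m: "(\<lambda>(y,z). ?f y z) \<in> borel_measurable (\<mu> \<Otimes>\<^sub>M lborel)" by measurable
  have "Phi v = (\<integral>\<^sup>+ y. (\<integral>\<^sup>+ w. ?f y w \<partial>lborel) \<partial>\<mu>)"
    unfolding Phi_def W_def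
  proof (rule nn_integral_cong, rule nn_integral_cong_AE)
    fix y :: real
    have "AE w in lborel. w \<noteq> y"
      by (rule AE_not_in[of "{y}", simplified]) (simp add: countable_imp_null_set_lborel)
    then show "AE w in lborel. indicator (ball y v) w * ennreal \<bar>dp w\<bar> = ?f y w"
      by eventually_elim (auto split: split_indicator simp: dist_commute)
  qed
  also have "\<dots> = (\<integral>\<^sup>+ w. (\<integral>\<^sup>+ y. ?f y w \<partial>\<mu>) \<partial>lborel)"
    by (rule Fubini'[OF m, symmetric])
  also have "\<dots> = (\<integral>\<^sup>+ z. ennreal \<bar>dp z\<bar> * emeasure \<mu> (ball z v - {z}) \<partial>lborel)"
  proof (intro nn_integral_cong)
    fix w :: real
    have "(\<integral>\<^sup>+ y. ?f y w \<partial>\<mu>) = (\<integral>\<^sup>+ y. ennreal \<bar>dp w\<bar> * indicator (ball w v - {w}) y \<partial>\<mu>)"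
      by (intro nn_integral_cong) (auto split: split_indicator simp: dist_commute)
    also have "\<dots> = ennreal \<bar>dp w\<bar> * emeasure \<mu> (ball w v - {w})"
      by (rule nn_integral_cmult_indicator) simp
    finally show "(\<integral>\<^sup>+ y. ?f y w \<partial>\<mu>) = ennreal \<bar>dp w\<bar> * emeasure \<mu> (ball w v - {w})" .
  qed
  finally show ?thesis .
qed

lemma mu_ball_le:
  assumes "0 < v" "v \<le> t0"
  shows "emeasure \<mu> (ball z v - {z}) \<le> ennreal (g z)"
proof -
  have "emeasure \<mu> (ball z v - {z}) \<le> emeasure \<mu> {z - v<..z + v}"
    by (intro emeasure_mono) (auto simp: dist_real_def)
  also have "\<dots> = ennreal (\<psi> (z - v) - \<psi> (z + v))" using assms by (intro mu_Ioc) simp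
  also have "\<dots> \<le> ennreal (g z)"
  proof (intro ennreal_leI)
    have "\<psi> (z - v) \<le> \<psi> (z - t0)" "\<psi> (z + t0) \<le> \<psi> (z + v)" using assms by (auto intro!: psi_le)
    then show "\<psi> (z - v) - \<psi> (z + v) \<le> g z" unfolding g_def by linarith
  qed
  finally show ?thesis .
qed

lemma Phi_le:
  assumes "0 < v" "v \<le> t0"
  shows "Phi v \<le> (\<integral>\<^sup>+z. ennreal (\<bar>dp z\<bar> * g z) \<partial>lborel)"
  unfolding Phi_eq
proof (intro nn_integral_mono)
  fix z
  have "ennreal \<bar>dp z\<bar> * emeasure \<mu> (ball z v - {z}) \<le> ennreal \<bar>dp z\<bar> * ennreal (g z)"
    by (intro mult_left_mono mu_ball_le assms) auto
  then show "ennreal \<bar>dp z\<bar> * emeasure \<mu> (ball z v - {z}) \<le> ennreal (\<bar>dp z\<bar> * g z)"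
    using g_nonneg[of z] by (simp add: ennreal_mult)
qed

lemma Phi_fin: "0 < v \<Longrightarrow> v \<le> t0 \<Longrightarrow> Phi v < \<infinity>"
  using Phi_le fin_dpg le_less_trans by blast

lemma W_mono: "v \<le> v' \<Longrightarrow> W v y \<le> W v' y"
  unfolding W_def by (intro nn_integral_mono) (auto split: split_indicator)

lemma Phi_mono: "v \<le> v' \<Longrightarrow> Phi v \<le> Phi v'"
  unfolding Phi_def by (intro nn_integral_mono W_mono)

lemma Phi_small:
  assumes "e > 0"
  shows "\<exists>\<delta>>0. \<forall>v. 0 < v \<and> v < \<delta> \<longrightarrow> Phi v < ennreal e"
proof -
  define vn where "vn n = t0 / real (Suc n)" for n
  have vn_pos: "vn n > 0" for n unfolding vn_def using t0_pos by simp
  have vn_le: "vn n \<le> t0" for n unfolding vn_def using t0_pos by (simp add: field_simps)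
  have vn_dec: "vn (Suc n) \<le> vn n" for n unfolding vn_def using t0_pos by (simp add: frac_le)
  define f where "f n z = ennreal \<bar>dp z\<bar> * emeasure \<mu> (ball z (vn n) - {z})" for n z
  have Af: "decseq (\<lambda>n. ball z (vn n) - {z})" for z
  proof (rule decseq_SucI)
    fix n show "ball z (vn (Suc n)) - {z} \<subseteq> ball z (vn n) - {z}" using vn_dec[of n] by auto
  qed
  have fdec: "decseq f"
  proof (rule decseq_SucI, rule le_funI)
    fix n and z :: real
    have "ball z (vn (Suc n)) - {z} \<subseteq> ball z (vn n) - {z}" using vn_dec[of n] by auto
    then show "f (Suc n) z \<le> f n z" unfolding f_def by (intro mult_left_mono emeasure_mono) auto
  qed
  have fmeas: "f n \<in> borel_measurable lborel" for n
  proof -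
    have "(\<lambda>z. emeasure \<mu> (ball z (vn n) - {z})) \<in> borel_measurable borel"
    proof -
      have "(\<lambda>(z,y). indicator {x::real\<times>real. dist (fst x) (snd x) < vn n \<and> fst x \<noteq> snd x} (z,y)) \<in> borel_measurable (borel \<Otimes>\<^sub>M \<mu>)"
        by measurable
      then have "(\<lambda>z. \<integral>\<^sup>+ y. indicator {x::real\<times>real. dist (fst x) (snd x) < vn n \<and> fst x \<noteq> snd x} (z,y) \<partial>\<mu>) \<in> borel_measurable borel"
        by (rule sigma_finite_measure.borel_measurable_nn_integral[OF mu_sigma_finite])
      moreover have "(\<lambda>z. \<integral>\<^sup>+ y. indicator {x::real\<times>real. dist (fst x) (snd x) < vn n \<and> fst x \<noteq> snd x} (z,y) \<partial>\<mu>)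
          = (\<lambda>z. emeasure \<mu> (ball z (vn n) - {z}))"
      proof
        fix z
        have "(\<integral>\<^sup>+ y. indicator {x::real\<times>real. dist (fst x) (snd x) < vn n \<and> fst x \<noteq> snd x} (z,y) \<partial>\<mu>)
            = (\<integral>\<^sup>+ y. indicator (ball z (vn n) - {z}) y \<partial>\<mu>)"
          by (intro nn_integral_cong) (auto split: split_indicator)
        also have "\<dots> = emeasure \<mu> (ball z (vn n) - {z})" by (rule nn_integral_indicator) simp
        finally show "(\<integral>\<^sup>+ y. indicator {x::real\<times>real. dist (fst x) (snd x) < vn n \<and> fst x \<noteq> snd x} (z,y) \<partial>\<mu>)
            = emeasure \<mu> (ball z (vn n) - {z})" .
      qed
      ultimately show ?thesis by simp
    qed
    then show ?thesis unfolding f_def by measurable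
  qed
  have ffin: "(\<integral>\<^sup>+ z. f n z \<partial>lborel) < \<infinity>" for n
    using Phi_fin[OF vn_pos vn_le, of n] unfolding Phi_eq f_def .
  have INF0: "(INF n. f n z) = 0" for z
  proof -
    have fin: "emeasure \<mu> (ball z (vn n) - {z}) \<noteq> \<infinity>" for n
      using mu_ball_le[OF vn_pos vn_le, of z n] by (auto simp: top_unique)
    have "(\<lambda>n. emeasure \<mu> (ball z (vn n) - {z})) \<longlonglongrightarrow> emeasure \<mu> (\<Inter>n. ball z (vn n) - {z})"
      by (rule Lim_emeasure_decseq[OF _ Af fin]) auto
    moreover have "(\<Inter>n. ball z (vn n) - {z}) = {}"
    proof (rule ccontr)
      assume "(\<Inter>n. ball z (vn n) - {z}) \<noteq> {}"
      then obtain w where w0: "w \<in> (\<Inter>n. ball z (vn n) - {z})" by blast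
      then have w: "\<And>n. w \<in> ball z (vn n)" "w \<noteq> z" by auto
      have "(\<lambda>n. vn n) \<longlonglongrightarrow> 0"
        unfolding vn_def using LIMSEQ_Suc[OF lim_const_over_n[of t0]] by simp
      then have "eventually (\<lambda>n. vn n < dist z w) sequentially"
        using w(2) by (intro order_tendstoD) auto
      then obtain n where "vn n < dist z w" by (auto simp: eventually_sequentially)
      then show False using w(1)[of n] by (simp add: dist_commute)
    qed
    ultimately have "(\<lambda>n. emeasure \<mu> (ball z (vn n) - {z})) \<longlonglongrightarrow> 0" by (metis emeasure_empty)
    then have "(\<lambda>n. f n z) \<longlonglongrightarrow> ennreal \<bar>dp z\<bar> * 0"
      unfolding f_def by (intro tendsto_mult_ennreal tendsto_const) auto
    moreover have "(\<lambda>n. f n z) \<longlonglongrightarrow> (INF n. f n z)"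
      by (rule LIMSEQ_INF, rule decseq_SucI, rule le_funD[OF decseq_SucD[OF fdec]])
    ultimately show ?thesis using LIMSEQ_unique by fastforce
  qed
  have "(\<integral>\<^sup>+ z. (INF n. f n z) \<partial>lborel) = (INF n. (\<integral>\<^sup>+ z. f n z \<partial>lborel))"
    by (rule nn_integral_monotone_convergence_INF_decseq[OF fdec fmeas ffin])
  then have "(INF n. (\<integral>\<^sup>+ z. f n z \<partial>lborel)) = 0" using INF0 by simp
  then have "(INF n. (\<integral>\<^sup>+ z. f n z \<partial>lborel)) < ennreal e" using assms by simp
  then obtain n where n: "(\<integral>\<^sup>+ z. f n z \<partial>lborel) < ennreal e" by (auto simp: INF_less_iff)
  have Pn: "Phi (vn n) < ennreal e" using n unfolding Phi_eq f_def .
  show ?thesis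
  proof (intro exI[of _ "vn n"] conjI allI impI)
    show "vn n > 0" by (rule vn_pos)
    fix v assume "0 < v \<and> v < vn n"
    then have "Phi v \<le> Phi (vn n)" by (intro Phi_mono) simp
    then show "Phi v < ennreal e" using Pn by simp
  qed
qed

end


context setting begin

definition "Av s t y = (\<integral>\<^sup>+ z. indicator {y+s..<y+t} z * ennreal (p z) \<partial>lborel)"
definition "Psi t = (\<integral>z. \<psi> (z - t) * p z \<partial>lborel)"
definition "P = (\<integral>y. p y \<partial>\<mu>)"

lemma Av_meas[measurable]: "Av s t \<in> borel_measurable borel"
proof -
  have "(\<lambda>(y,z). indicator {x::real\<times>real. fst x + s \<le> snd x \<and> snd x < fst x + t} (y,z) * ennreal (p z)) \<in> borel_measurable (borel \<Otimes>\<^sub>M lborel)"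
    by measurable
  then have "(\<lambda>y. \<integral>\<^sup>+ z. indicator {x::real\<times>real. fst x + s \<le> snd x \<and> snd x < fst x + t} (y,z) * ennreal (p z) \<partial>lborel) \<in> borel_measurable borel"
    by (rule lborel.borel_measurable_nn_integral)
  moreover have "(\<lambda>y. \<integral>\<^sup>+ z. indicator {x::real\<times>real. fst x + s \<le> snd x \<and> snd x < fst x + t} (y,z) * ennreal (p z) \<partial>lborel) = Av s t"
    unfolding Av_def by (intro ext nn_integral_cong) (auto split: split_indicator)
  ultimately show ?thesis by simp
qed

lemma ftc_ball2:
  assumes "dist y a \<le> v" "dist y b \<le> v"
  shows "ennreal \<bar>p b - p a\<bar> \<le> W v y"
proof -
  have "ennreal \<bar>p b - p a\<bar> \<le> (\<integral>\<^sup>+z. indicator {min a b<..<max a b} z * ennreal \<bar>dp z\<bar> \<partial>lborel)"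
    by (rule ftc_sym)
  also have "\<dots> \<le> W v y"
    unfolding W_def
  proof (intro nn_integral_mono)
    fix w
    have "{min a b<..<max a b} \<subseteq> ball y v" using assms by (auto simp: dist_real_def min_def max_def)
    then show "indicator {min a b<..<max a b} w * ennreal \<bar>dp w\<bar> \<le> indicator (ball y v) w * ennreal \<bar>dp w\<bar>"
      by (auto split: split_indicator)
  qed
  finally show ?thesis .
qed

lemma ennreal_abs_le: "ennreal (x::real) \<le> ennreal y + ennreal \<bar>x - y\<bar>"
proof (cases "y \<ge> 0")
  case True
  then have "ennreal y + ennreal \<bar>x - y\<bar> = ennreal (y + \<bar>x - y\<bar>)" by (simp add: ennreal_plus)
  moreover have "ennreal x \<le> ennreal (y + \<bar>x - y\<bar>)" by (intro ennreal_leI) linarith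
  ultimately show ?thesis by simp
next
  case False
  then have a: "ennreal x \<le> ennreal \<bar>x - y\<bar>" by (intro ennreal_leI) linarith
  have "ennreal y = 0" using False by (simp add: ennreal_neg)
  then show ?thesis using a by simp
qed

lemma avg_upper:
  assumes "s \<le> t" "\<bar>s\<bar> \<le> v" "\<bar>t\<bar> \<le> v" "dist y a \<le> v"
  shows "Av s t y \<le> ennreal (t - s) * (ennreal (p a) + W v y)"
proof -
  have "Av s t y \<le> (\<integral>\<^sup>+ z. (ennreal (p a) + W v y) * indicator {y+s..<y+t} z \<partial>lborel)"
    unfolding Av_def
  proof (intro nn_integral_mono)
    fix z
    show "indicator {y+s..<y+t} z * ennreal (p z) \<le> (ennreal (p a) + W v y) * indicator {y+s..<y+t} z"
    proof (cases "z \<in> {y+s..<y+t}")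
      case True
      then have "dist y z \<le> v" using assms by (auto simp: dist_real_def)
      then have "ennreal \<bar>p z - p a\<bar> \<le> W v y" using ftc_ball2[OF assms(4)] by blast
      then have "ennreal (p z) \<le> ennreal (p a) + W v y"
        using ennreal_abs_le[of "p z" "p a"] by (meson add_left_mono order_trans)
      then show ?thesis using True by simp
    qed simp
  qed
  also have "\<dots> = (ennreal (p a) + W v y) * ennreal (t - s)"
    using assms by (subst nn_integral_cmult_indicator) auto
  finally show ?thesis by (simp add: mult.commute)
qed

lemma avg_lower:
  assumes "s \<le> t" "\<bar>s\<bar> \<le> v" "\<bar>t\<bar> \<le> v" "dist y a \<le> v"
  shows "ennreal (t - s) * ennreal (p a) \<le> Av s t y + ennreal (t - s) * W v y"
proof -
  have "ennreal (t - s) * ennreal (p a) = (\<integral>\<^sup>+ z. ennreal (p a) * indicator {y+s..<y+t} z \<partial>lborel)"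
    using assms by (subst nn_integral_cmult_indicator) (auto simp: mult.commute)
  also have "\<dots> \<le> (\<integral>\<^sup>+ z. indicator {y+s..<y+t} z * ennreal (p z) + W v y * indicator {y+s..<y+t} z \<partial>lborel)"
  proof (intro nn_integral_mono)
    fix z
    show "ennreal (p a) * indicator {y+s..<y+t} z \<le> indicator {y+s..<y+t} z * ennreal (p z) + W v y * indicator {y+s..<y+t} z"
    proof (cases "z \<in> {y+s..<y+t}")
      case True
      then have "dist y z \<le> v" using assms by (auto simp: dist_real_def)
      then have "ennreal \<bar>p a - p z\<bar> \<le> W v y" using ftc_ball2[OF _ assms(4)] by blast
      then have "ennreal (p a) \<le> ennreal (p z) + W v y"
        using ennreal_abs_le[of "p a" "p z"] by (meson add_left_mono order_trans)
      then show ?thesis using True by simp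
    qed simp
  qed
  also have "\<dots> = Av s t y + W v y * ennreal (t - s)"
    unfolding Av_def using assms
    by (subst nn_integral_add) (auto simp: nn_integral_cmult_indicator)
  finally show ?thesis by (simp add: mult.commute)
qed

lemma int_diff_psi:
  assumes "s \<le> t" "\<bar>s\<bar> \<le> t0" "\<bar>t\<bar> \<le> t0"
  shows "(\<integral>\<^sup>+ y. Av s t y \<partial>\<mu>) = ennreal (Psi t - Psi s)" "Psi s \<le> Psi t"
proof -
  have i: "integrable lborel (\<lambda>z. (\<psi> (z - t) - \<psi> (z - s)) * p z)"
    using int_psi_p[OF assms(3)] int_psi_p[OF assms(2)] by (simp add: left_diff_distrib)
  have nn: "0 \<le> (\<psi> (z - t) - \<psi> (z - s)) * p z" for z
    using psi_le[of "z - t" "z - s"] assms(1) p_nonneg[of z] by simp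
  have "(\<integral>z. (\<psi> (z - t) - \<psi> (z - s)) * p z \<partial>lborel) = Psi t - Psi s"
    unfolding Psi_def using int_psi_p[OF assms(3)] int_psi_p[OF assms(2)]
    by (simp add: left_diff_distrib)
  moreover have "(\<integral>\<^sup>+ z. ennreal ((\<psi> (z - t) - \<psi> (z - s)) * p z) \<partial>lborel) = ennreal (\<integral>z. (\<psi> (z - t) - \<psi> (z - s)) * p z \<partial>lborel)"
    using nn_integral_eq_integral[OF i] nn by simp
  moreover have "0 \<le> (\<integral>z. (\<psi> (z - t) - \<psi> (z - s)) * p z \<partial>lborel)"
    using nn by (intro integral_nonneg_AE) auto
  ultimately show "(\<integral>\<^sup>+ y. Av s t y \<partial>\<mu>) = ennreal (Psi t - Psi s)" "Psi s \<le> Psi t"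
    using tonelli_psi[OF assms(1)] unfolding Av_def by auto
qed

lemma p_mu_fin:
  assumes "\<bar>t\<bar> \<le> t0"
  shows "(\<integral>\<^sup>+ y. ennreal (p (y - t)) \<partial>\<mu>) < \<infinity>"
proof -
  have "(\<integral>\<^sup>+ y. ennreal (2 * t0) * ennreal (p (y - t)) \<partial>\<mu>) \<le>
        (\<integral>\<^sup>+ y. Av (-t0) t0 y + ennreal (2 * t0) * W t0 y \<partial>\<mu>)"
  proof (intro nn_integral_mono)
    fix y
    have "ennreal (t0 - - t0) * ennreal (p (y - t)) \<le> Av (-t0) t0 y + ennreal (t0 - - t0) * W t0 y"
      using assms t0_pos by (intro avg_lower) (auto simp: dist_real_def)
    then show "ennreal (2 * t0) * ennreal (p (y - t)) \<le> Av (-t0) t0 y + ennreal (2 * t0) * W t0 y"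
      by simp
  qed
  also have "\<dots> = (\<integral>\<^sup>+ y. Av (-t0) t0 y \<partial>\<mu>) + ennreal (2 * t0) * Phi t0"
    unfolding Phi_def by (subst nn_integral_add) (auto simp: nn_integral_cmult)
  also have "\<dots> < \<infinity>"
    using int_diff_psi[of "-t0" t0] t0_pos Phi_fin[of t0] by (simp add: ennreal_mult_less_top less_top)
  finally have "ennreal (2 * t0) * (\<integral>\<^sup>+ y. ennreal (p (y - t)) \<partial>\<mu>) < \<infinity>"
    by (subst (asm) nn_integral_cmult) auto
  then have "(\<integral>\<^sup>+ y. ennreal (p (y - t)) \<partial>\<mu>) = 0 \<or> (\<integral>\<^sup>+ y. ennreal (p (y - t)) \<partial>\<mu>) < top"
    using t0_pos by (simp add: ennreal_mult_less_top)
  then show ?thesis by auto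
qed

lemma int_mu_p:
  assumes "\<bar>t\<bar> \<le> t0"
  shows "integrable \<mu> (\<lambda>y. p (y - t))"
  unfolding integrable_iff_bounded
proof
  show "(\<lambda>y. p (y - t)) \<in> borel_measurable \<mu>" by measurable
  show "(\<integral>\<^sup>+ y. ennreal (norm (p (y - t))) \<partial>\<mu>) < \<infinity>"
    using p_mu_fin[OF assms] p_nonneg by simp
qed

lemma P_eq: "ennreal P = (\<integral>\<^sup>+ y. ennreal (p y) \<partial>\<mu>)" "P \<ge> 0"
proof -
  have i: "integrable \<mu> p" using int_mu_p[of 0] t0_pos by simp
  show "ennreal P = (\<integral>\<^sup>+ y. ennreal (p y) \<partial>\<mu>)"
    unfolding P_def using nn_integral_eq_integral[OF i] p_nonneg by simp
  show "P \<ge> 0" unfolding P_def using p_nonneg by (simp add: integral_nonneg_AE)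
qed

lemma quot_bound_lt:
  assumes "0 < v" "v \<le> t0" "s < t" "\<bar>s\<bar> \<le> v" "\<bar>t\<bar> \<le> v"
  shows "\<bar>(Psi t - Psi s) / (t - s) - P\<bar> \<le> enn2real (Phi v)"
proof -
  have st: "\<bar>s\<bar> \<le> t0" "\<bar>t\<bar> \<le> t0" using assms by auto
  have Pf: "Phi v < \<infinity>" using Phi_fin assms by auto
  define Q where "Q = Psi t - Psi s"
  have Q: "(\<integral>\<^sup>+ y. Av s t y \<partial>\<mu>) = ennreal Q" "Q \<ge> 0" unfolding Q_def using int_diff_psi[OF _ st] assms by auto
  have Phi_r: "Phi v = ennreal (enn2real (Phi v))" using Pf by simp
  define R where "R = enn2real (Phi v)"
  have R: "Phi v = ennreal R" "R \<ge> 0" unfolding R_def using Phi_r by auto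
  have up: "ennreal Q \<le> ennreal (t - s) * (ennreal P + ennreal R)"
  proof -
    have "(\<integral>\<^sup>+ y. Av s t y \<partial>\<mu>) \<le> (\<integral>\<^sup>+ y. ennreal (t - s) * (ennreal (p y) + W v y) \<partial>\<mu>)"
      using assms by (intro nn_integral_mono avg_upper) auto
    also have "\<dots> = ennreal (t - s) * ((\<integral>\<^sup>+ y. ennreal (p y) \<partial>\<mu>) + Phi v)"
      unfolding Phi_def by (subst nn_integral_cmult) (auto simp: nn_integral_add)
    finally show ?thesis using Q P_eq R by simp
  qed
  have lo: "ennreal (t - s) * ennreal P \<le> ennreal Q + ennreal (t - s) * ennreal R"
  proof -
    have "ennreal (t - s) * ennreal P = (\<integral>\<^sup>+ y. ennreal (t - s) * ennreal (p y) \<partial>\<mu>)"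
      using P_eq by (subst nn_integral_cmult) auto
    also have "\<dots> \<le> (\<integral>\<^sup>+ y. Av s t y + ennreal (t - s) * W v y \<partial>\<mu>)"
      using assms by (intro nn_integral_mono avg_lower) auto
    also have "\<dots> = (\<integral>\<^sup>+ y. Av s t y \<partial>\<mu>) + ennreal (t - s) * Phi v"
      unfolding Phi_def by (subst nn_integral_add) (auto simp: nn_integral_cmult)
    finally show ?thesis using Q R by simp
  qed
  have ts: "t - s > 0" using assms by simp
  have e1: "ennreal (t - s) * (ennreal P + ennreal R) = ennreal ((t - s) * (P + R))"
    using ts P_eq(2) R(2) by (simp add: ennreal_mult ennreal_plus)
  have e2: "ennreal (t - s) * ennreal P = ennreal ((t - s) * P)"
    using ts P_eq(2) by (simp add: ennreal_mult)
  have e3: "ennreal Q + ennreal (t - s) * ennreal R = ennreal (Q + (t - s) * R)"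
    using ts Q(2) R(2) by (simp add: ennreal_mult ennreal_plus)
  have up': "Q \<le> (t - s) * (P + R)"
  proof -
    have "0 \<le> (t - s) * (P + R)" using ts P_eq(2) R(2) by simp
    then show ?thesis using up unfolding e1 by simp
  qed
  have lo': "(t - s) * P \<le> Q + (t - s) * R"
  proof -
    have "0 \<le> Q + (t - s) * R" using ts Q(2) R(2) by simp
    then show ?thesis using lo unfolding e2 e3 by simp
  qed
  have "Q / (t - s) - P \<le> R" using up' ts by (simp add: field_simps)
  moreover have "P - Q / (t - s) \<le> R" using lo' ts by (simp add: field_simps)
  ultimately show ?thesis unfolding Q_def R_def by linarith
qed

lemma quot_bound:
  assumes "0 < v" "v \<le> t0" "s \<noteq> t" "\<bar>s\<bar> \<le> v" "\<bar>t\<bar> \<le> v"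
  shows "\<bar>(Psi t - Psi s) / (t - s) - P\<bar> \<le> enn2real (Phi v)"
proof (cases "s < t")
  case True then show ?thesis using quot_bound_lt assms by auto
next
  case False
  then have "t < s" using assms by simp
  then have "\<bar>(Psi s - Psi t) / (s - t) - P\<bar> \<le> enn2real (Phi v)" using quot_bound_lt assms by auto
  moreover have "(Psi s - Psi t) / (s - t) = (Psi t - Psi s) / (t - s)"
    by (metis minus_diff_eq minus_divide_divide)
  ultimately show ?thesis by simp
qed

lemma shift_bound:
  assumes "0 < \<bar>t\<bar>" "\<bar>t\<bar> \<le> t0"
  shows "\<bar>(\<integral>y. p (y - t) \<partial>\<mu>) - P\<bar> \<le> enn2real (Phi \<bar>t\<bar>)"
proof -
  have i1: "integrable \<mu> (\<lambda>y. p (y - t))" using int_mu_p assms by simp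
  have i0: "integrable \<mu> p" using int_mu_p[of 0] t0_pos by simp
  have "ennreal \<bar>(\<integral>y. p (y - t) \<partial>\<mu>) - P\<bar> = ennreal (norm (\<integral>y. p (y - t) - p y \<partial>\<mu>))"
    unfolding P_def using i1 i0 by simp
  also have "\<dots> \<le> (\<integral>\<^sup>+ y. norm (p (y - t) - p y) \<partial>\<mu>)"
    by (rule integral_norm_bound_ennreal) (use i1 i0 in simp)
  also have "\<dots> \<le> (\<integral>\<^sup>+ y. W \<bar>t\<bar> y \<partial>\<mu>)"
  proof (intro nn_integral_mono)
    fix y
    show "ennreal (norm (p (y - t) - p y)) \<le> W \<bar>t\<bar> y"
      using ftc_ball2[of y y "\<bar>t\<bar>" "y - t"] by (simp add: dist_real_def)
  qed
  also have "\<dots> = ennreal (enn2real (Phi \<bar>t\<bar>))"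
    unfolding Phi_def[symmetric] using Phi_fin[of "\<bar>t\<bar>"] assms by simp
  finally have "ennreal \<bar>(\<integral>y. p (y - t) \<partial>\<mu>) - P\<bar> \<le> ennreal (enn2real (Phi \<bar>t\<bar>))" .
  then show ?thesis using enn2real_nonneg[of "Phi \<bar>t\<bar>"] by simp
qed

end


context setting begin

lemma psi_cont_AE: "AE z in lborel. isCont \<psi> z"
proof -
  have "countable {z. \<not> isCont (\<lambda>x. - \<psi> x) z}"
    by (rule mono_ctble_discont) (auto simp: mono_def psi_le)
  moreover have "{z. \<not> isCont \<psi> z} \<subseteq> {z. \<not> isCont (\<lambda>x. - \<psi> x) z}"
  proof -
    have "isCont \<psi> z" if "isCont (\<lambda>x. - \<psi> x) z" for z using isCont_minus[OF that] by simp
    then show ?thesis by blast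
  qed
  ultimately have "countable {z. \<not> isCont \<psi> z}" by (rule countable_subset[rotated])
  then have "{z. \<not> isCont \<psi> z} \<in> null_sets lborel" by (rule countable_imp_null_set_lborel)
  from AE_not_in[OF this] show ?thesis by simp
qed

lemma clamp_tendsto:
  assumes "X \<longlonglongrightarrow> (0::real)"
  shows "(\<lambda>i. max (-t0) (min t0 (X i))) \<longlonglongrightarrow> 0" "\<forall>\<^sub>F i in sequentially. max (-t0) (min t0 (X i)) = X i"
proof -
  have "\<forall>\<^sub>F i in sequentially. \<bar>X i\<bar> < t0"
    using assms t0_pos by (simp add: tendsto_iff dist_real_def)
  then show ev: "\<forall>\<^sub>F i in sequentially. max (-t0) (min t0 (X i)) = X i"
    by eventually_elim auto
  show "(\<lambda>i. max (-t0) (min t0 (X i))) \<longlonglongrightarrow> 0"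
  proof (rule Lim_transform_eventually[OF assms])
    show "\<forall>\<^sub>F i in sequentially. X i = max (- t0) (min t0 (X i))"
      by (rule eventually_mono[OF ev]) simp
  qed
qed

lemma C2: "((\<lambda>t. \<integral>\<^sup>+ z. ennreal ((\<psi> (z - t) - \<psi> z)\<^sup>2 * p z) \<partial>lborel) \<longlongrightarrow> 0) (at 0)"
  unfolding tendsto_at_iff_sequentially
proof (intro allI impI)
  fix X :: "nat \<Rightarrow> real" assume X: "\<forall>i. X i \<in> UNIV - {0}" "X \<longlonglongrightarrow> 0"
  define Y where "Y i = max (-t0) (min t0 (X i))" for i
  have Y0: "Y \<longlonglongrightarrow> 0" and YX: "\<forall>\<^sub>F i in sequentially. Y i = X i"
    using clamp_tendsto[OF X(2)] unfolding Y_def by auto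
  have Yb: "\<bar>Y i\<bar> \<le> t0" for i unfolding Y_def using t0_pos by auto
  define u where "u i z = (\<psi> (z - Y i) - \<psi> z)\<^sup>2 * p z" for i z
  define w where "w z = 4 * ((g z)\<^sup>2 * p z)" for z
  have u_meas: "u i \<in> borel_measurable lborel" for i unfolding u_def by measurable
  have w_meas: "w \<in> borel_measurable lborel" unfolding w_def by measurable
  have bound: "AE z in lborel. norm (u i z) \<le> w z" for i
  proof (intro AE_I2)
    fix z
    have a: "\<bar>\<psi> (z - Y i)\<bar> \<le> g z" by (rule abs_psi_le_g[OF Yb])
    have b: "\<bar>\<psi> z\<bar> \<le> g z" using abs_psi_le_g[of 0 z] t0_pos by simp
    have "\<bar>\<psi> (z - Y i) - \<psi> z\<bar> \<le> 2 * g z" using a b by linarith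
    then have "(\<psi> (z - Y i) - \<psi> z)\<^sup>2 \<le> (2 * g z)\<^sup>2"
      by (metis abs_ge_zero power2_abs power_mono)
    then have "(\<psi> (z - Y i) - \<psi> z)\<^sup>2 * p z \<le> (2 * g z)\<^sup>2 * p z"
      using p_nonneg[of z] by (rule mult_right_mono)
    then show "norm (u i z) \<le> w z" unfolding u_def w_def using p_nonneg[of z]
      by (simp add: power_mult_distrib)
  qed
  have wfin: "(\<integral>\<^sup>+ z. w z \<partial>lborel) < \<infinity>"
  proof -
    have "(\<integral>\<^sup>+ z. ennreal (w z) \<partial>lborel) = (\<integral>\<^sup>+ z. 4 * ennreal ((g z)\<^sup>2 * p z) \<partial>lborel)"
      unfolding w_def using p_nonneg by (intro nn_integral_cong) (simp add: ennreal_mult)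
    also have "\<dots> = 4 * (\<integral>\<^sup>+ z. ennreal ((g z)\<^sup>2 * p z) \<partial>lborel)"
      by (rule nn_integral_cmult) measurable
    finally show ?thesis using fin_g2 by (simp add: ennreal_mult_less_top)
  qed
  have lim: "AE z in lborel. (\<lambda>i. u i z) \<longlonglongrightarrow> 0"
    using psi_cont_AE
  proof eventually_elim
    case (elim z)
    have "(\<lambda>i. z - Y i) \<longlonglongrightarrow> z - 0" by (intro tendsto_intros Y0)
    then have "(\<lambda>i. z - Y i) \<longlonglongrightarrow> z" by simp
    then have "(\<lambda>i. \<psi> (z - Y i)) \<longlonglongrightarrow> \<psi> z"
      by (rule isCont_tendsto_compose[OF elim])
    then have "(\<lambda>i. (\<psi> (z - Y i) - \<psi> z)\<^sup>2 * p z) \<longlonglongrightarrow> (\<psi> z - \<psi> z)\<^sup>2 * p z"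
      by (intro tendsto_intros)
    then show ?case unfolding u_def by simp
  qed
  have "(\<lambda>i. (\<integral>\<^sup>+x. norm (0 - u i x) \<partial>lborel)) \<longlonglongrightarrow> 0"
    by (rule nn_integral_dominated_convergence_norm[OF u_meas _ w_meas bound wfin lim]) simp
  moreover have "(\<integral>\<^sup>+x. norm (0 - u i x) \<partial>lborel) = (\<integral>\<^sup>+ z. ennreal ((\<psi> (z - Y i) - \<psi> z)\<^sup>2 * p z) \<partial>lborel)" for i
    unfolding u_def using p_nonneg by (intro nn_integral_cong) simp
  ultimately have "(\<lambda>i. (\<integral>\<^sup>+ z. ennreal ((\<psi> (z - Y i) - \<psi> z)\<^sup>2 * p z) \<partial>lborel)) \<longlonglongrightarrow> 0" by simp
  then show "((\<lambda>t. \<integral>\<^sup>+ z. ennreal ((\<psi> (z - t) - \<psi> z)\<^sup>2 * p z) \<partial>lborel) \<circ> X) \<longlonglongrightarrow> 0"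
  proof (rule Lim_transform_eventually)
    show "\<forall>\<^sub>F i in sequentially. (\<integral>\<^sup>+ z. ennreal ((\<psi> (z - Y i) - \<psi> z)\<^sup>2 * p z) \<partial>lborel) =
       ((\<lambda>t. \<integral>\<^sup>+ z. ennreal ((\<psi> (z - t) - \<psi> z)\<^sup>2 * p z) \<partial>lborel) \<circ> X) i"
      by (rule eventually_mono[OF YX]) simp
  qed
qed

end


lemma ennreal_tendsto_0I:
  fixes f :: "'a \<Rightarrow> ennreal"
  assumes "\<And>e::real. e > 0 \<Longrightarrow> eventually (\<lambda>x. f x \<le> ennreal e) F"
  shows "(f \<longlongrightarrow> 0) F"
proof (rule order_tendstoI)
  fix a :: ennreal assume "a < 0" then show "eventually (\<lambda>x. a < f x) F" by simp
next
  fix a :: ennreal assume "0 < a"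
  then obtain b where b: "0 < b" "b < a" using dense by blast
  then have "b \<noteq> top" using top.not_eq_extremum by fastforce
  then have be: "b = ennreal (enn2real b)" by (cases b) auto
  have "enn2real b > 0" using b \<open>b \<noteq> top\<close> by (simp add: enn2real_positive_iff less_top)
  then have "eventually (\<lambda>x. f x \<le> ennreal (enn2real b)) F" by (rule assms)
  then show "eventually (\<lambda>x. f x < a) F"
    by (rule eventually_mono) (use b be in \<open>metis le_less_trans\<close>)
qed

lemma sqrt_diff_sq:
  fixes a b :: real assumes "0 \<le> a" "0 \<le> b"
  shows "(sqrt a - sqrt b)\<^sup>2 \<le> \<bar>a - b\<bar>" "(sqrt a - sqrt b)\<^sup>2 \<le> a + b"
proof -
  let ?x = "sqrt a" and ?y = "sqrt b"
  have x: "?x \<ge> 0" "?x\<^sup>2 = a" and y: "?y \<ge> 0" "?y\<^sup>2 = b" using assms by auto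
  have "(?x - ?y)\<^sup>2 = \<bar>?x - ?y\<bar> * \<bar>?x - ?y\<bar>" by (simp add: power2_eq_square abs_mult_self_eq)
  also have "\<dots> \<le> \<bar>?x - ?y\<bar> * (?x + ?y)"
  proof (rule mult_left_mono)
    show "\<bar>?x - ?y\<bar> \<le> ?x + ?y" using x y by (simp add: abs_le_iff)
  qed simp
  also have "\<dots> = \<bar>(?x - ?y) * (?x + ?y)\<bar>" using x y by (simp add: abs_mult)
  also have "(?x - ?y) * (?x + ?y) = ?x\<^sup>2 - ?y\<^sup>2" by (simp add: power2_eq_square algebra_simps)
  finally show "(sqrt a - sqrt b)\<^sup>2 \<le> \<bar>a - b\<bar>" using x y by simp
  have "(?x - ?y)\<^sup>2 = ?x\<^sup>2 + ?y\<^sup>2 - 2 * ?x * ?y" by (simp add: power2_eq_square algebra_simps)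
  also have "\<dots> \<le> ?x\<^sup>2 + ?y\<^sup>2" using x y by simp
  finally show "(sqrt a - sqrt b)\<^sup>2 \<le> a + b" using x y by simp
qed

lemma trunc_pointwise:
  fixes a b c D M :: real
  assumes "0 \<le> M" "0 \<le> D" "D \<le> \<bar>a - b\<bar>" "D \<le> a + b" "0 \<le> c"
  shows "c * D \<le> M * \<bar>a - b\<bar> + max 0 (c - M) * (a + b)"
proof -
  have "c = min c M + max 0 (c - M)" by (auto simp: min_def max_def)
  then have "c * D = min c M * D + max 0 (c - M) * D" by (metis distrib_right)
  also have "min c M * D \<le> M * \<bar>a - b\<bar>"
    using assms by (intro mult_mono) auto
  also have "max 0 (c - M) * D \<le> max 0 (c - M) * (a + b)"
    using assms by (intro mult_left_mono) auto
  finally show ?thesis by simp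
qed

lemma nn_translate:
  fixes f :: "real \<Rightarrow> ennreal"
  assumes [measurable]: "f \<in> borel_measurable borel"
  shows "(\<integral>\<^sup>+ x. f (x + t) \<partial>lborel) = (\<integral>\<^sup>+ x. f x \<partial>lborel)"
  using nn_integral_real_affine[OF assms, of 1 t] by (simp add: add.commute)

context setting begin

lemma L1_shift: "(\<integral>\<^sup>+ z. ennreal \<bar>p (z + t) - p z\<bar> \<partial>lborel) \<le> ennreal \<bar>t\<bar> * (\<integral>\<^sup>+ w. ennreal \<bar>dp w\<bar> \<partial>lborel)"
proof -
  let ?S = "{x::real\<times>real. min (fst x) (fst x + t) < snd x \<and> snd x < max (fst x) (fst x + t)}"
  have m: "(\<lambda>(z,w). indicator ?S (z,w) * ennreal \<bar>dp w\<bar>) \<in> borel_measurable (lborel \<Otimes>\<^sub>M lborel)"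
    by measurable
  have "(\<integral>\<^sup>+ z. ennreal \<bar>p (z + t) - p z\<bar> \<partial>lborel) \<le> (\<integral>\<^sup>+ z. (\<integral>\<^sup>+ w. indicator ?S (z,w) * ennreal \<bar>dp w\<bar> \<partial>lborel) \<partial>lborel)"
  proof (intro nn_integral_mono)
    fix z
    have "ennreal \<bar>p (z + t) - p z\<bar> \<le> (\<integral>\<^sup>+w. indicator {min z (z + t)<..<max z (z + t)} w * ennreal \<bar>dp w\<bar> \<partial>lborel)"
      by (rule ftc_sym)
    also have "\<dots> = (\<integral>\<^sup>+ w. indicator ?S (z,w) * ennreal \<bar>dp w\<bar> \<partial>lborel)"
      by (intro nn_integral_cong) (auto split: split_indicator)
    finally show "ennreal \<bar>p (z + t) - p z\<bar> \<le> (\<integral>\<^sup>+ w. indicator ?S (z,w) * ennreal \<bar>dp w\<bar> \<partial>lborel)" .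
  qed
  also have "\<dots> = (\<integral>\<^sup>+ w. (\<integral>\<^sup>+ z. indicator ?S (z,w) * ennreal \<bar>dp w\<bar> \<partial>lborel) \<partial>lborel)"
    by (rule lborel_pair.Fubini'[OF m, symmetric])
  also have "\<dots> = (\<integral>\<^sup>+ w. ennreal \<bar>dp w\<bar> * ennreal \<bar>t\<bar> \<partial>lborel)"
  proof (intro nn_integral_cong)
    fix w :: real
    have "(\<integral>\<^sup>+ z. indicator ?S (z,w) * ennreal \<bar>dp w\<bar> \<partial>lborel) =
          (\<integral>\<^sup>+ z. ennreal \<bar>dp w\<bar> * indicator {w - max 0 t<..<w - min 0 t} z \<partial>lborel)"
      by (intro nn_integral_cong) (auto split: split_indicator simp: min_def max_def)
    also have "\<dots> = ennreal \<bar>dp w\<bar> * emeasure lborel {w - max 0 t<..<w - min 0 t}"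
      by (rule nn_integral_cmult_indicator) simp
    also have "emeasure lborel {w - max 0 t<..<w - min 0 t} = ennreal \<bar>t\<bar>"
      by (subst emeasure_lborel_Ioo) (auto simp: min_def max_def)
    finally show "(\<integral>\<^sup>+ z. indicator ?S (z,w) * ennreal \<bar>dp w\<bar> \<partial>lborel) = ennreal \<bar>dp w\<bar> * ennreal \<bar>t\<bar>" .
  qed
  also have "\<dots> = ennreal \<bar>t\<bar> * (\<integral>\<^sup>+ w. ennreal \<bar>dp w\<bar> \<partial>lborel)"
    by (subst nn_integral_multc) (auto simp: mult.commute)
  finally show ?thesis .
qed

lemma trunc_tail:
  assumes "e > 0"
  shows "\<exists>M\<ge>0. (\<integral>\<^sup>+ z. ennreal (max 0 (H z - M) * p z) \<partial>lborel) < ennreal e"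
proof -
  define f where "f n z = ennreal (max 0 (H z - real n) * p z)" for n z
  have fdec: "decseq f"
  proof (rule decseq_SucI, rule le_funI)
    fix n z
    show "f (Suc n) z \<le> f n z" unfolding f_def using p_nonneg[of z]
      by (intro ennreal_leI mult_right_mono) auto
  qed
  have fmeas: "f n \<in> borel_measurable lborel" for n unfolding f_def by measurable
  have ffin: "(\<integral>\<^sup>+ z. f n z \<partial>lborel) < \<infinity>" for n
  proof (rule fin_le[OF _ fin_H])
    fix z show "f n z \<le> ennreal (H z * p z)" unfolding f_def using p_nonneg[of z] H_nonneg[of z]
      by (intro ennreal_leI mult_right_mono) auto
  qed
  have INF0: "(INF n. f n z) = 0" for z
  proof -
    obtain n :: nat where "H z < real n" using reals_Archimedean2 by blast
    then have "f n z = 0" unfolding f_def by simp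
    then have "(INF n. f n z) \<le> 0" by (metis INF_lower UNIV_I)
    then show ?thesis by simp
  qed
  have "(\<integral>\<^sup>+ z. (INF n. f n z) \<partial>lborel) = (INF n. (\<integral>\<^sup>+ z. f n z \<partial>lborel))"
    by (rule nn_integral_monotone_convergence_INF_decseq[OF fdec fmeas ffin])
  then have "(INF n. (\<integral>\<^sup>+ z. f n z \<partial>lborel)) < ennreal e" using INF0 assms by simp
  then obtain n where "(\<integral>\<^sup>+ z. f n z \<partial>lborel) < ennreal e" by (auto simp: INF_less_iff)
  then show ?thesis unfolding f_def by (intro exI[of _ "real n"]) auto
qed

lemma C1: "((\<lambda>t. \<integral>\<^sup>+ z. ennreal ((\<psi> z)\<^sup>2 * (sqrt (p (z + t)) - sqrt (p z))\<^sup>2) \<partial>lborel) \<longlongrightarrow> 0) (at 0)"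
proof (rule ennreal_tendsto_0I)
  fix e :: real assume e: "e > 0"
  obtain M where M: "M \<ge> 0" "(\<integral>\<^sup>+ z. ennreal (max 0 (H z - M) * p z) \<partial>lborel) < ennreal (e/4)"
    using trunc_tail[of "e/4"] e by auto
  define K where "K = enn2real (\<integral>\<^sup>+ w. ennreal \<bar>dp w\<bar> \<partial>lborel)"
  have K: "(\<integral>\<^sup>+ w. ennreal \<bar>dp w\<bar> \<partial>lborel) = ennreal K" "K \<ge> 0"
    unfolding K_def using fin_dp by auto
  define \<delta> where "\<delta> = min t0 (e / (2 * (M * K + 1)))"
  have MK: "M * K + 1 > 0" using M K by (simp add: add_nonneg_pos)
  have \<delta>: "\<delta> > 0" unfolding \<delta>_def using t0_pos e MK by simp
  show "\<forall>\<^sub>F t in at 0. (\<integral>\<^sup>+ z. ennreal ((\<psi> z)\<^sup>2 * (sqrt (p (z + t)) - sqrt (p z))\<^sup>2) \<partial>lborel) \<le> ennreal e"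
  proof -
  have ev: "\<forall>\<^sub>F t in at (0::real). \<bar>t\<bar> < \<delta>"
    using tendsto_iff[THEN iffD1, OF tendsto_ident_at[of "0::real" UNIV], rule_format, OF \<delta>]
    by (simp add: dist_real_def)
  show ?thesis using ev
  proof eventually_elim
    case (elim t)
    then have t: "\<bar>t\<bar> < \<delta>" by simp
    then have tt0: "\<bar>t\<bar> \<le> t0" unfolding \<delta>_def by simp
    have tM: "M * (\<bar>t\<bar> * K) \<le> e / 2"
    proof -
      have "\<bar>t\<bar> \<le> e / (2 * (M * K + 1))" using t unfolding \<delta>_def by simp
      then have a: "\<bar>t\<bar> * (2 * (M * K + 1)) \<le> e" using MK by (simp add: field_simps)
      have "M * (\<bar>t\<bar> * K) \<le> \<bar>t\<bar> * (M * K + 1)" using M K by (simp add: algebra_simps)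
      then have "2 * (M * (\<bar>t\<bar> * K)) \<le> \<bar>t\<bar> * (2 * (M * K + 1))" by (simp add: algebra_simps)
      then show ?thesis using a by simp
    qed
    define A where "A z = max 0 ((\<psi> z)\<^sup>2 - M) * p (z + t)" for z
    define B where "B z = max 0 ((\<psi> z)\<^sup>2 - M) * p z" for z
    have A0: "A z \<ge> 0" "B z \<ge> 0" for z unfolding A_def B_def using p_nonneg by auto
    have "(\<integral>\<^sup>+ z. ennreal ((\<psi> z)\<^sup>2 * (sqrt (p (z + t)) - sqrt (p z))\<^sup>2) \<partial>lborel) \<le>
          (\<integral>\<^sup>+ z. ennreal M * ennreal \<bar>p (z + t) - p z\<bar> + (ennreal (A z) + ennreal (B z)) \<partial>lborel)"
    proof (intro nn_integral_mono)
      fix z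
      have "(\<psi> z)\<^sup>2 * (sqrt (p (z + t)) - sqrt (p z))\<^sup>2 \<le> M * \<bar>p (z + t) - p z\<bar> + max 0 ((\<psi> z)\<^sup>2 - M) * (p (z + t) + p z)"
        using sqrt_diff_sq[OF p_nonneg p_nonneg, of "z + t" z] M by (intro trunc_pointwise) auto
      also have "\<dots> = M * \<bar>p (z + t) - p z\<bar> + (A z + B z)" unfolding A_def B_def by (simp add: algebra_simps)
      finally have "ennreal ((\<psi> z)\<^sup>2 * (sqrt (p (z + t)) - sqrt (p z))\<^sup>2) \<le> ennreal (M * \<bar>p (z + t) - p z\<bar> + (A z + B z))"
        by (rule ennreal_leI)
      also have "\<dots> = ennreal M * ennreal \<bar>p (z + t) - p z\<bar> + (ennreal (A z) + ennreal (B z))"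
        using M A0[of z] by (simp add: ennreal_mult ennreal_plus)
      finally show "ennreal ((\<psi> z)\<^sup>2 * (sqrt (p (z + t)) - sqrt (p z))\<^sup>2) \<le> ennreal M * ennreal \<bar>p (z + t) - p z\<bar> + (ennreal (A z) + ennreal (B z))" .
    qed
    also have "\<dots> = ennreal M * (\<integral>\<^sup>+ z. ennreal \<bar>p (z + t) - p z\<bar> \<partial>lborel) + ((\<integral>\<^sup>+ z. ennreal (A z) \<partial>lborel) + (\<integral>\<^sup>+ z. ennreal (B z) \<partial>lborel))"
      unfolding A_def B_def by (simp add: nn_integral_add nn_integral_cmult)
    also have "ennreal M * (\<integral>\<^sup>+ z. ennreal \<bar>p (z + t) - p z\<bar> \<partial>lborel) \<le> ennreal (e/2)"
    proof -
      have "ennreal M * (\<integral>\<^sup>+ z. ennreal \<bar>p (z + t) - p z\<bar> \<partial>lborel) \<le> ennreal M * (ennreal \<bar>t\<bar> * ennreal K)"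
        using L1_shift[of t] K by (intro mult_left_mono) auto
      also have "\<dots> = ennreal (M * (\<bar>t\<bar> * K))" using M K by (simp add: ennreal_mult)
      also have "\<dots> \<le> ennreal (e/2)" using tM by (rule ennreal_leI)
      finally show ?thesis .
    qed
    also have "(\<integral>\<^sup>+ z. ennreal (A z) \<partial>lborel) \<le> ennreal (e/4)"
    proof -
      have "(\<integral>\<^sup>+ z. ennreal (A z) \<partial>lborel) = (\<integral>\<^sup>+ z. ennreal (max 0 ((\<psi> (z - t))\<^sup>2 - M) * p z) \<partial>lborel)"
        unfolding A_def using nn_translate[of "\<lambda>z. ennreal (max 0 ((\<psi> (z - t))\<^sup>2 - M) * p z)" t] by simp
      also have "\<dots> \<le> (\<integral>\<^sup>+ z. ennreal (max 0 (H z - M) * p z) \<partial>lborel)"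
      proof (intro nn_integral_mono ennreal_leI mult_right_mono)
        fix x show "max 0 ((\<psi> (x - t))\<^sup>2 - M) \<le> max 0 (H x - M)"
          using psi_sq_le_H[OF tt0, of x] by (meson diff_right_mono max.mono order_refl)
      qed (rule p_nonneg)
      finally show ?thesis using M by simp
    qed
    also have "(\<integral>\<^sup>+ z. ennreal (B z) \<partial>lborel) \<le> ennreal (e/4)"
    proof -
      have "(\<integral>\<^sup>+ z. ennreal (B z) \<partial>lborel) \<le> (\<integral>\<^sup>+ z. ennreal (max 0 (H z - M) * p z) \<partial>lborel)"
        unfolding B_def
      proof (intro nn_integral_mono ennreal_leI mult_right_mono)
        fix x show "max 0 ((\<psi> x)\<^sup>2 - M) \<le> max 0 (H x - M)"
          using psi_sq_le_H[of 0 x] t0_pos by (simp add: max.mono)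
      qed (rule p_nonneg)
      then show ?thesis using M by simp
    qed
    also have "ennreal (e/2) + (ennreal (e/4) + ennreal (e/4)) = ennreal e"
      using e by (simp add: ennreal_plus[symmetric] del: ennreal_plus)
    finally show "(\<integral>\<^sup>+ z. ennreal ((\<psi> z)\<^sup>2 * (sqrt (p (z + t)) - sqrt (p z))\<^sup>2) \<partial>lborel) \<le> ennreal e"
      by (simp add: add_mono)
  qed
  qed
qed

end


lemma tendsto_at0_bound:
  fixes f :: "real \<Rightarrow> real"
  assumes "\<And>e. e > 0 \<Longrightarrow> \<exists>\<delta>>0. \<forall>t. t \<noteq> 0 \<and> \<bar>t\<bar> < \<delta> \<longrightarrow> \<bar>f t - L\<bar> < e"
  shows "(f \<longlongrightarrow> L) (at 0)"
proof (rule tendstoI)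
  fix e :: real assume "e > 0"
  then obtain \<delta> where \<delta>: "\<delta> > 0" "\<And>t. t \<noteq> 0 \<and> \<bar>t\<bar> < \<delta> \<Longrightarrow> \<bar>f t - L\<bar> < e" using assms by blast
  show "\<forall>\<^sub>F t in at 0. dist (f t) L < e"
    unfolding eventually_at using \<delta> by (intro exI[of _ \<delta>]) (auto simp: dist_real_def)
qed

context setting begin

lemma Phi_real_small:
  assumes "e > 0"
  shows "\<exists>\<delta>>0. \<delta> \<le> t0 \<and> (\<forall>v. 0 < v \<and> v < \<delta> \<longrightarrow> enn2real (Phi v) < e)"
proof -
  obtain \<delta> where \<delta>: "\<delta> > 0" "\<And>v. 0 < v \<and> v < \<delta> \<Longrightarrow> Phi v < ennreal e"
    using Phi_small[OF assms] by blast
  have "enn2real (Phi v) < e" if "0 < v" "v < min \<delta> t0" for v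
  proof -
    have "Phi v < ennreal e" using \<delta>(2) that by simp
    then show ?thesis using assms by (cases "Phi v") (auto simp: ennreal_less_iff)
  qed
  then show ?thesis using \<delta>(1) t0_pos by (intro exI[of _ "min \<delta> t0"]) auto
qed

lemma LS_eq: "LS_integral_dec \<psi> (\<lambda>z. p (z - t)) = - (\<integral>y. p (y - t) \<partial>\<mu>)"
  unfolding LS_integral_dec_def by simp

lemma LS_eq0: "LS_integral_dec \<psi> p = - P"
  unfolding LS_integral_dec_def P_def by simp

lemma C5: "((\<lambda>t. LS_integral_dec \<psi> (\<lambda>z. p (z - t))) \<longlongrightarrow> LS_integral_dec \<psi> p) (at 0)"
proof (rule tendsto_at0_bound)
  fix e :: real assume e: "e > 0"
  obtain \<delta> where \<delta>: "\<delta> > 0" "\<delta> \<le> t0" "\<And>v. 0 < v \<and> v < \<delta> \<Longrightarrow> enn2real (Phi v) < e"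
    using Phi_real_small[OF e] by blast
  show "\<exists>\<delta>>0. \<forall>t. t \<noteq> 0 \<and> \<bar>t\<bar> < \<delta> \<longrightarrow> \<bar>LS_integral_dec \<psi> (\<lambda>z. p (z - t)) - LS_integral_dec \<psi> p\<bar> < e"
  proof (intro exI[of _ \<delta>] conjI allI impI)
    fix t assume t: "t \<noteq> 0 \<and> \<bar>t\<bar> < \<delta>"
    have "\<bar>(\<integral>y. p (y - t) \<partial>\<mu>) - P\<bar> \<le> enn2real (Phi \<bar>t\<bar>)"
      using t \<delta> by (intro shift_bound) auto
    also have "\<dots> < e" using t \<delta> by auto
    finally show "\<bar>LS_integral_dec \<psi> (\<lambda>z. p (z - t)) - LS_integral_dec \<psi> p\<bar> < e"
      unfolding LS_eq LS_eq0 by linarith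
  qed (fact \<delta>)
qed

lemma C6: "(Psi has_real_derivative P) (at 0)"
  unfolding has_field_derivative_iff
proof (rule tendsto_at0_bound)
  fix e :: real assume e: "e > 0"
  obtain \<delta> where \<delta>: "\<delta> > 0" "\<delta> \<le> t0" "\<And>v. 0 < v \<and> v < \<delta> \<Longrightarrow> enn2real (Phi v) < e"
    using Phi_real_small[OF e] by blast
  show "\<exists>\<delta>>0. \<forall>t. t \<noteq> 0 \<and> \<bar>t\<bar> < \<delta> \<longrightarrow> \<bar>(Psi t - Psi 0) / (t - 0) - P\<bar> < e"
  proof (intro exI[of _ \<delta>] conjI allI impI)
    fix t assume t: "t \<noteq> 0 \<and> \<bar>t\<bar> < \<delta>"
    have "\<bar>(Psi t - Psi 0) / (t - 0) - P\<bar> \<le> enn2real (Phi \<bar>t\<bar>)"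
      using t \<delta> by (intro quot_bound) auto
    also have "\<dots> < e" using t \<delta> by auto
    finally show "\<bar>(Psi t - Psi 0) / (t - 0) - P\<bar> < e" .
  qed (fact \<delta>)
qed

lemma C4: "((\<lambda>v. SUP st \<in> {(s, t). s \<in> {-v..v} \<and> t \<in> {-v..v} \<and> s \<noteq> t}.
              ereal \<bar>(Psi (snd st) - Psi (fst st)) / (snd st - fst st) + LS_integral_dec \<psi> p\<bar>)
            \<longlongrightarrow> 0) (at_right 0)"
proof -
  let ?S = "\<lambda>v. {(s, t). s \<in> {-v..v} \<and> t \<in> {-v..v} \<and> s \<noteq> t}"
  let ?F = "\<lambda>st. ereal \<bar>(Psi (snd st) - Psi (fst st)) / (snd st - fst st) + LS_integral_dec \<psi> p\<bar>"
  have lim: "((\<lambda>v. enn2real (Phi v)) \<longlongrightarrow> 0) (at_right 0)"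
  proof (rule tendstoI)
    fix e :: real assume e: "e > 0"
    obtain \<delta> where \<delta>: "\<delta> > 0" "\<delta> \<le> t0" "\<And>v. 0 < v \<and> v < \<delta> \<Longrightarrow> enn2real (Phi v) < e"
      using Phi_real_small[OF e] by blast
    show "\<forall>\<^sub>F v in at_right 0. dist (enn2real (Phi v)) 0 < e"
      using eventually_at_right_real[OF \<delta>(1)] by eventually_elim (use \<delta> in auto)
  qed
  have ev: "\<forall>\<^sub>F v in at_right 0. v \<in> {0<..<t0}" by (rule eventually_at_right_real[OF t0_pos])
  show ?thesis
  proof (rule tendsto_sandwich[of "\<lambda>_. 0" _ _ "\<lambda>v. ereal (enn2real (Phi v))"])
    show "\<forall>\<^sub>F v in at_right 0. 0 \<le> (SUP st \<in> ?S v. ?F st)"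
      using ev
    proof eventually_elim
      case (elim v)
      then have "(-v, v) \<in> ?S v" by auto
      then show ?case by (rule SUP_upper2) simp
    qed
    show "\<forall>\<^sub>F v in at_right 0. (SUP st \<in> ?S v. ?F st) \<le> ereal (enn2real (Phi v))"
      using ev
    proof eventually_elim
      case (elim v)
      show ?case
      proof (rule SUP_least)
        fix st assume "st \<in> ?S v"
        then obtain s t where st: "st = (s, t)" "\<bar>s\<bar> \<le> v" "\<bar>t\<bar> \<le> v" "s \<noteq> t" by auto
        have "\<bar>(Psi t - Psi s) / (t - s) - P\<bar> \<le> enn2real (Phi v)"
          using elim st by (intro quot_bound) auto
        then show "?F st \<le> ereal (enn2real (Phi v))" unfolding st LS_eq0 by simp
      qed
    qed
    show "((\<lambda>_. 0) \<longlongrightarrow> (0::ereal)) (at_right 0)" by simp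
    show "((\<lambda>v. ereal (enn2real (Phi v))) \<longlongrightarrow> 0) (at_right 0)"
      using tendsto_ereal[OF lim] by (simp add: zero_ereal_def)
  qed
qed

end

theorem lemma6p28:
  fixes p0 \<psi> :: "real \<Rightarrow> real" and t0 :: real
  assumes p0_nonneg: "\<And>z. p0 z \<ge> 0"
    and p0_int: "integrable lborel p0"
    and p0_density: "(\<integral>z. p0 z \<partial>lborel) = 1"
    and p0_ac: "abs_continuous p0"
    and fisher: "\<exists>p0'. p0' \<in> borel_measurable borel
                    \<and> (AE z in lborel. (p0 has_real_derivative p0' z) (at z))
                    \<and> fisher_info p0 p0' < \<infinity>"
    and psi_dec: "antimono \<psi>"
    and psi_rc: "\<And>x. continuous (at_right x) \<psi>"
    and t0_pos: "t0 > 0"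
    and psi_sq: "\<And>t. t \<in> {-t0, t0} \<Longrightarrow>
                   (\<integral>\<^sup>+ z. ennreal ((\<psi> (z - t))\<^sup>2 * p0 z) \<partial>lborel) < \<infinity>"
  defines "\<Psi> \<equiv> (\<lambda>t. \<integral>z. \<psi> (z - t) * p0 z \<partial>lborel)"
  shows "((\<lambda>t. \<integral>\<^sup>+ z. ennreal ((\<psi> z)\<^sup>2 * (sqrt (p0 (z + t)) - sqrt (p0 z))\<^sup>2) \<partial>lborel)
            \<longlongrightarrow> 0) (at 0)
      \<and> ((\<lambda>t. \<integral>\<^sup>+ z. ennreal ((\<psi> (z - t) - \<psi> z)\<^sup>2 * p0 z) \<partial>lborel) \<longlongrightarrow> 0) (at 0)
      \<and> (\<forall>t \<in> {-t0..t0}. integrable lborel (\<lambda>z. \<psi> (z - t) * p0 z)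
                         \<and> LS_integrable_dec \<psi> (\<lambda>z. p0 (z - t)))
      \<and> ((\<lambda>v. SUP st \<in> {(s, t). s \<in> {-v..v} \<and> t \<in> {-v..v} \<and> s \<noteq> t}.
              ereal \<bar>(\<Psi> (snd st) - \<Psi> (fst st)) / (snd st - fst st) + LS_integral_dec \<psi> p0\<bar>)
            \<longlongrightarrow> 0) (at_right 0)
      \<and> ((\<lambda>t. LS_integral_dec \<psi> (\<lambda>z. p0 (z - t))) \<longlongrightarrow> LS_integral_dec \<psi> p0) (at 0)
      \<and> (\<Psi> has_real_derivative (- LS_integral_dec \<psi> p0)) (at 0)
      \<and> - LS_integral_dec \<psi> p0 \<ge> 0"
proof -
  from fisher obtain p0' where p0': "p0' \<in> borel_measurable borel"
    "AE z in lborel. (p0 has_real_derivative p0' z) (at z)" "fisher_info p0 p0' < \<infinity>" by blast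
  interpret S: setting p0 p0' \<psi> t0
    by (unfold_locales) (use assms p0' in auto)
  have Psi_eq: "\<Psi> = S.Psi" unfolding \<Psi>_def S.Psi_def by simp
  show ?thesis
  proof (intro conjI ballI)
    show "((\<lambda>t. \<integral>\<^sup>+ z. ennreal ((\<psi> z)\<^sup>2 * (sqrt (p0 (z + t)) - sqrt (p0 z))\<^sup>2) \<partial>lborel) \<longlongrightarrow> 0) (at 0)"
      by (rule S.C1)
    show "((\<lambda>t. \<integral>\<^sup>+ z. ennreal ((\<psi> (z - t) - \<psi> z)\<^sup>2 * p0 z) \<partial>lborel) \<longlongrightarrow> 0) (at 0)"
      by (rule S.C2)
    fix t assume "t \<in> {-t0..t0}"
    then have t: "\<bar>t\<bar> \<le> t0" by auto
    show "integrable lborel (\<lambda>z. \<psi> (z - t) * p0 z)" by (rule S.int_psi_p[OF t])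
    show "LS_integrable_dec \<psi> (\<lambda>z. p0 (z - t))"
      unfolding LS_integrable_dec_def by (rule S.int_mu_p[OF t])
  next
    show "((\<lambda>v. SUP st \<in> {(s, t). s \<in> {-v..v} \<and> t \<in> {-v..v} \<and> s \<noteq> t}.
              ereal \<bar>(\<Psi> (snd st) - \<Psi> (fst st)) / (snd st - fst st) + LS_integral_dec \<psi> p0\<bar>)
            \<longlongrightarrow> 0) (at_right 0)"
      unfolding Psi_eq by (rule S.C4)
    show "((\<lambda>t. LS_integral_dec \<psi> (\<lambda>z. p0 (z - t))) \<longlongrightarrow> LS_integral_dec \<psi> p0) (at 0)"
      by (rule S.C5)
    show "(\<Psi> has_real_derivative (- LS_integral_dec \<psi> p0)) (at 0)"
      unfolding Psi_eq S.LS_eq0 using S.C6 by simp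
    show "- LS_integral_dec \<psi> p0 \<ge> 0"
      unfolding S.LS_eq0 using S.P_eq(2) by simp
  qed
qed


end
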